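(* Let $n_A,n_B\ge1$, let $H\in\mathbb{C}^{(n_An_B)\times(n_An_B)}$ be the Hermitian payoff Hamiltonian of a zero-sum quantum game on $\mathbb{C}^{n_A}\otimes\mathbb{C}^{n_B}$ (player $A$ minimizes, player $B$ maximizes the payoff $\operatorname{tr}((\rho_A\otimes\rho_B)H)$), and let $\Delta\ge0$ be the deception budget. Consider the bilinear semidefinite program $$\min_{\rho_A,\Omega\in\mathbb{C}^{n_A\times n_A},\ \rho_B\in\mathbb{C}^{n_B\times n_B},\ D\in\mathbb{C}^{(n_An_B)\times(n_An_B)},\ u\in\mathbb{R}}\ \operatorname{tr}\big((\rho_A\otimes\rho_B)H\big)$$ subject to $\operatorname{tr}_B\big((I_A\otimes\rho_B)(H+D)\big)\succeq u\,I_A$, $\operatorname{tr}_A\big((\Omega\otimes I_B)(H+D)\big)\preceq u\,I_B$, $D=D^\dagger$, $\|D\|_1\le\Delta$, $\rho_A,\rho_B,\Omega\succeq0$, and $\operatorname{tr}(\rho_A)=\operatorname{tr}(\rho_B)=\operatorname{tr}(\Omega)=1$. If $(\rho_A^\star,D^\star,\rho_B^\star,\Omega^\star,u^\star)$ is an optimal solution of this program, then $(\rho_A^\star,D^\star,\rho_B^\star)$ is an optimal solution of the bilevel quantum deception problem $$\min_{\rho_A\in\mathcal{P}_A,\ \rho_B\in\mathcal{P}_B,\ D\in\mathcal{D}}\ \operatorname{tr}\big((\rho_A\otimes\rho_B)H\big)\quad\text{s.t.}\quad \rho_B\in\Phi_B(H+D).$$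
   Context: $\mathcal{P}_A$ (resp. $\mathcal{P}_B$) denotes the set of $n_A\times n_A$ (resp. $n_B\times n_B$) complex positive semidefinite matrices of trace one (density matrices). $\mathcal{D}=\{D\in\mathbb{C}^{(n_An_B)\times(n_An_B)}:D=D^\dagger,\ \|D\|_1\le\Delta\}$, where $\|A\|_1=\sup_{\|x\|_1=1}\|Ax\|_1$ is the matrix norm induced by the vector $1$-norm. For a Hermitian $H'$, $\Phi_B(H')=\operatorname*{arg\,max}_{\rho_B\in\mathcal{P}_B}\min_{\rho_A\in\mathcal{P}_A}\operatorname{tr}((\rho_A\otimes\rho_B)H')$ is the set of security policies of the maximizing player $B$ in the zero-sum game with payoff Hamiltonian $H'$. $\operatorname{tr}_A,\operatorname{tr}_B$ are the partial traces over the factors $\mathbb{C}^{n_A}$ and $\mathbb{C}^{n_B}$; $I_A=I_{n_A}$, $I_B=I_{n_B}$; $\succeq$ is the Loewner order. *)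

theory Defs
  imports "Jordan_Normal_Form.Schur_Decomposition"
begin

definition mtrace :: "complex mat \<Rightarrow> complex" where
  "mtrace A = (\<Sum>i<dim_row A. A $$ (i, i))"

definition hermitian_mat :: "nat \<Rightarrow> complex mat \<Rightarrow> bool" where
  "hermitian_mat n A \<longleftrightarrow> A \<in> carrier_mat n n \<and> mat_adjoint A = A"

definition psd_mat :: "nat \<Rightarrow> complex mat \<Rightarrow> bool" where
  "psd_mat n A \<longleftrightarrow> hermitian_mat n A \<and>
     (\<forall>v \<in> carrier_vec n. 0 \<le> Re (conjugate v \<bullet> (A *\<^sub>v v)))"

definition loewner_ge :: "nat \<Rightarrow> complex mat \<Rightarrow> complex mat \<Rightarrow> bool" where
  "loewner_ge n A B \<longleftrightarrow> A \<in> carrier_mat n n \<and> B \<in> carrier_mat n n \<and> psd_mat n (A - B)"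

definition density_mats :: "nat \<Rightarrow> complex mat set" where
  "density_mats n = {\<rho>. psd_mat n \<rho> \<and> mtrace \<rho> = 1}"

(* Kronecker (tensor) product; index of C^{nA} \<otimes> C^{nB}: (i,k) \<mapsto> i*nB + k *)
definition kron :: "complex mat \<Rightarrow> complex mat \<Rightarrow> complex mat" where
  "kron A B = mat (dim_row A * dim_row B) (dim_col A * dim_col B)
     (\<lambda>(i, j). A $$ (i div dim_row B, j div dim_col B) * B $$ (i mod dim_row B, j mod dim_col B))"

definition ptrace_B :: "nat \<Rightarrow> nat \<Rightarrow> complex mat \<Rightarrow> complex mat" where
  "ptrace_B nA nB M = mat nA nA (\<lambda>(i, j). \<Sum>k<nB. M $$ (i * nB + k, j * nB + k))"

definition ptrace_A :: "nat \<Rightarrow> nat \<Rightarrow> complex mat \<Rightarrow> complex mat" where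
  "ptrace_A nA nB M = mat nB nB (\<lambda>(i, j). \<Sum>k<nA. M $$ (k * nB + i, k * nB + j))"

definition vec_norm1 :: "complex vec \<Rightarrow> real" where
  "vec_norm1 v = (\<Sum>i<dim_vec v. cmod (v $ i))"

definition mat_norm1 :: "complex mat \<Rightarrow> real" where
  "mat_norm1 A = Sup {vec_norm1 (A *\<^sub>v x) | x. x \<in> carrier_vec (dim_col A) \<and> vec_norm1 x = 1}"

definition deception_set :: "nat \<Rightarrow> real \<Rightarrow> complex mat set" where
  "deception_set n \<Delta> = {D. hermitian_mat n D \<and> mat_norm1 D \<le> \<Delta>}"

(* payoff tr((\<rho>A \<otimes> \<rho>B) H) (real for Hermitian arguments; we take the real part) *)
definition payoff :: "complex mat \<Rightarrow> complex mat \<Rightarrow> complex mat \<Rightarrow> real" where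
  "payoff H \<rho>A \<rho>B = Re (mtrace (kron \<rho>A \<rho>B * H))"

definition sec_value_B :: "nat \<Rightarrow> complex mat \<Rightarrow> complex mat \<Rightarrow> real" where
  "sec_value_B nA H \<rho>B = Inf {payoff H \<rho>A \<rho>B | \<rho>A. \<rho>A \<in> density_mats nA}"

definition Phi_B :: "nat \<Rightarrow> nat \<Rightarrow> complex mat \<Rightarrow> complex mat set" where
  "Phi_B nA nB H = {\<rho>B. \<rho>B \<in> density_mats nB \<and>
      (\<forall>\<sigma> \<in> density_mats nB. sec_value_B nA H \<sigma> \<le> sec_value_B nA H \<rho>B)}"

definition bilevel_feasible :: "nat \<Rightarrow> nat \<Rightarrow> complex mat \<Rightarrow> real \<Rightarrow>
    complex mat \<Rightarrow> complex mat \<Rightarrow> complex mat \<Rightarrow> bool" where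
  "bilevel_feasible nA nB H \<Delta> \<rho>A D \<rho>B \<longleftrightarrow>
     \<rho>A \<in> density_mats nA \<and> \<rho>B \<in> density_mats nB \<and> D \<in> deception_set (nA * nB) \<Delta> \<and>
     \<rho>B \<in> Phi_B nA nB (H + D)"

definition bilevel_optimal :: "nat \<Rightarrow> nat \<Rightarrow> complex mat \<Rightarrow> real \<Rightarrow>
    complex mat \<Rightarrow> complex mat \<Rightarrow> complex mat \<Rightarrow> bool" where
  "bilevel_optimal nA nB H \<Delta> \<rho>A D \<rho>B \<longleftrightarrow>
     bilevel_feasible nA nB H \<Delta> \<rho>A D \<rho>B \<and>
     (\<forall>\<rho>A' D' \<rho>B'. bilevel_feasible nA nB H \<Delta> \<rho>A' D' \<rho>B' \<longrightarrow>
        payoff H \<rho>A \<rho>B \<le> payoff H \<rho>A' \<rho>B')"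

definition sdp_feasible :: "nat \<Rightarrow> nat \<Rightarrow> complex mat \<Rightarrow> real \<Rightarrow>
    complex mat \<Rightarrow> complex mat \<Rightarrow> complex mat \<Rightarrow> complex mat \<Rightarrow> real \<Rightarrow> bool" where
  "sdp_feasible nA nB H \<Delta> \<rho>A D \<rho>B \<Omega> u \<longleftrightarrow>
     loewner_ge nA (ptrace_B nA nB (kron (1\<^sub>m nA) \<rho>B * (H + D))) (complex_of_real u \<cdot>\<^sub>m 1\<^sub>m nA) \<and>
     loewner_ge nB (complex_of_real u \<cdot>\<^sub>m 1\<^sub>m nB) (ptrace_A nA nB (kron \<Omega> (1\<^sub>m nB) * (H + D))) \<and>
     hermitian_mat (nA * nB) D \<and> mat_norm1 D \<le> \<Delta> \<and>
     psd_mat nA \<rho>A \<and> psd_mat nB \<rho>B \<and> psd_mat nA \<Omega> \<and>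
     mtrace \<rho>A = 1 \<and> mtrace \<rho>B = 1 \<and> mtrace \<Omega> = 1"

definition sdp_optimal :: "nat \<Rightarrow> nat \<Rightarrow> complex mat \<Rightarrow> real \<Rightarrow>
    complex mat \<Rightarrow> complex mat \<Rightarrow> complex mat \<Rightarrow> complex mat \<Rightarrow> real \<Rightarrow> bool" where
  "sdp_optimal nA nB H \<Delta> \<rho>A D \<rho>B \<Omega> u \<longleftrightarrow>
     sdp_feasible nA nB H \<Delta> \<rho>A D \<rho>B \<Omega> u \<and>
     (\<forall>\<rho>A' D' \<rho>B' \<Omega>' u'. sdp_feasible nA nB H \<Delta> \<rho>A' D' \<rho>B' \<Omega>' u' \<longrightarrow>
        payoff H \<rho>A \<rho>B \<le> payoff H \<rho>A' \<rho>B')"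

end

theory Submission
  imports Defs "HOL-Analysis.Function_Topology" "HOL-Analysis.Convex"
begin



lemma adj_index:
  assumes "A \<in> carrier_mat n n" "i < n" "j < n"
  shows "mat_adjoint A $$ (i,j) = cnj (A $$ (j,i))"
  using assms unfolding mat_adjoint_def
  by (simp add: mat_of_rows_def)

lemma adj_carrier: "A \<in> carrier_mat n n \<Longrightarrow> mat_adjoint A \<in> carrier_mat n n"
  unfolding mat_adjoint_def mat_of_rows_def by (intro carrier_matI) auto

lemma hermitian_iff:
  "hermitian_mat n A \<longleftrightarrow> A \<in> carrier_mat n n \<and> (\<forall>i<n. \<forall>j<n. cnj (A$$(i,j)) = A$$(j,i))"
proof
  assume h: "hermitian_mat n A"
  then have A: "A \<in> carrier_mat n n" and e: "mat_adjoint A = A" unfolding hermitian_mat_def by auto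
  show "A \<in> carrier_mat n n \<and> (\<forall>i<n. \<forall>j<n. cnj (A$$(i,j)) = A$$(j,i))"
  proof (intro conjI allI impI A)
    fix i j assume "i < n" "j < n"
    then show "cnj (A$$(i,j)) = A$$(j,i)" using adj_index[OF A, of i j] e by simp
  qed
next
  assume h: "A \<in> carrier_mat n n \<and> (\<forall>i<n. \<forall>j<n. cnj (A$$(i,j)) = A$$(j,i))"
  then have A: "A \<in> carrier_mat n n" by auto
  have "mat_adjoint A = A"
  proof (rule eq_matI)
    fix i j assume i: "i < dim_row A" and j: "j < dim_col A"
    then have i': "i < n" and j': "j < n" using A by auto
    have "mat_adjoint A $$ (i,j) = cnj (A$$(j,i))" by (rule adj_index[OF A i' j'])
    also have "\<dots> = A$$(i,j)" using h i' j' by blast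
    finally show "mat_adjoint A $$ (i,j) = A$$(i,j)" .
  qed (use adj_carrier[OF A] A in auto)
  then show "hermitian_mat n A" using A unfolding hermitian_mat_def by auto
qed

definition qf :: "nat \<Rightarrow> (nat \<Rightarrow> nat \<Rightarrow> complex) \<Rightarrow> (nat \<Rightarrow> complex) \<Rightarrow> complex" where
  "qf n r w = (\<Sum>i<n. \<Sum>j<n. cnj (w i) * r i j * w j)"

lemma quad_form:
  assumes "A \<in> carrier_mat n n" "v \<in> carrier_vec n"
  shows "conjugate v \<bullet> (A *\<^sub>v v) = qf n (\<lambda>i j. A$$(i,j)) (\<lambda>i. v$i)"
proof -
  have d: "dim_vec (A *\<^sub>v v) = n" using assms by simp
  have r: "(A *\<^sub>v v) $ i = (\<Sum>j\<in>{0..<n}. A$$(i,j) * v$j)" if "i < n" for i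
  proof -
    have "(A *\<^sub>v v) $ i = row A i \<bullet> v" using that assms by simp
    also have "\<dots> = (\<Sum>j\<in>{0..<n}. row A i $ j * v $ j)" using assms unfolding scalar_prod_def by simp
    also have "\<dots> = (\<Sum>j\<in>{0..<n}. A$$(i,j) * v$j)" using that assms
      by (intro sum.cong) auto
    finally show ?thesis .
  qed
  have "conjugate v \<bullet> (A *\<^sub>v v) = (\<Sum>i\<in>{0..<n}. conjugate v $ i * (A *\<^sub>v v) $ i)"
    unfolding scalar_prod_def d ..
  also have "\<dots> = (\<Sum>i\<in>{0..<n}. cnj (v$i) * (\<Sum>j\<in>{0..<n}. A$$(i,j) * v$j))"
    using assms r by (intro sum.cong) auto
  also have "\<dots> = qf n (\<lambda>i j. A$$(i,j)) (\<lambda>i. v$i)"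
    unfolding qf_def lessThan_atLeast0 by (simp only: sum_distrib_left mult.assoc)
  finally show ?thesis .
qed

definition psdf :: "nat \<Rightarrow> (nat \<Rightarrow> nat \<Rightarrow> complex) \<Rightarrow> bool" where
  "psdf n r \<longleftrightarrow> (\<forall>i<n. \<forall>j<n. cnj (r i j) = r j i) \<and> (\<forall>w. 0 \<le> Re (qf n r w))"

lemma qf_cong: "(\<And>i. i < n \<Longrightarrow> w i = w' i) \<Longrightarrow> qf n r w = qf n r w'"
  unfolding qf_def by (intro sum.cong) auto

lemma qf_cong_r: "(\<And>i j. i < n \<Longrightarrow> j < n \<Longrightarrow> r i j = r' i j) \<Longrightarrow> qf n r w = qf n r' w"
  unfolding qf_def by (intro sum.cong) auto

lemma psd_iff:
  "psd_mat n A \<longleftrightarrow> A \<in> carrier_mat n n \<and> psdf n (\<lambda>i j. A$$(i,j))"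
proof
  assume h: "psd_mat n A"
  then have A: "A \<in> carrier_mat n n" unfolding psd_mat_def hermitian_mat_def by auto
  have herm: "\<forall>i<n. \<forall>j<n. cnj (A$$(i,j)) = A$$(j,i)" using h unfolding hermitian_iff psd_mat_def by blast
  have "0 \<le> Re (qf n (\<lambda>i j. A$$(i,j)) w)" for w
  proof -
    have "qf n (\<lambda>i j. A$$(i,j)) w = qf n (\<lambda>i j. A$$(i,j)) (\<lambda>i. vec n w $ i)"
      by (rule qf_cong) simp
    also have "\<dots> = conjugate (vec n w) \<bullet> (A *\<^sub>v vec n w)"
      by (rule quad_form[symmetric, OF A]) simp
    finally show ?thesis using h unfolding psd_mat_def by auto
  qed
  then show "A \<in> carrier_mat n n \<and> psdf n (\<lambda>i j. A$$(i,j))" using A herm unfolding psdf_def by blast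
next
  assume h: "A \<in> carrier_mat n n \<and> psdf n (\<lambda>i j. A$$(i,j))"
  then have A: "A \<in> carrier_mat n n" by auto
  have "hermitian_mat n A" unfolding hermitian_iff using h A unfolding psdf_def by blast
  moreover have "0 \<le> Re (conjugate v \<bullet> (A *\<^sub>v v))" if "v \<in> carrier_vec n" for v
    unfolding quad_form[OF A that] using h unfolding psdf_def by blast
  ultimately show "psd_mat n A" unfolding psd_mat_def by blast
qed




lemma sum_prod_idx: "(\<Sum>a<m*n. f a) = (\<Sum>i<m. \<Sum>k<n. f (i*n+k::nat))"
proof (induction m)
  case 0 then show ?case by simp
next
  case (Suc m)
  have "(\<Sum>a<Suc m * n. f a) = (\<Sum>a<m*n. f a) + (\<Sum>a\<in>{m*n..<m*n+n}. f a)"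
    by (simp add: lessThan_atLeast0 sum.atLeastLessThan_concat add.commute)
  also have "(\<Sum>a\<in>{m*n..<m*n+n}. f a) = (\<Sum>k<n. f (m*n+k))"
  proof -
    have "(\<Sum>a\<in>{m*n..<m*n+n}. f a) = (\<Sum>a\<in>{0+m*n..<n+m*n}. f a)" by (simp add: add.commute)
    also have "\<dots> = (\<Sum>k\<in>{0..<n}. f (k+m*n))" by (rule sum.shift_bounds_nat_ivl)
    finally show ?thesis by (simp add: lessThan_atLeast0 add.commute)
  qed
  finally show ?case using Suc by simp
qed

lemma idx_div[simp]: "k < n \<Longrightarrow> (i*n+k::nat) div n = i"
  by simp
lemma idx_mod[simp]: "k < n \<Longrightarrow> (i*n+k::nat) mod n = k"
  by simp
lemma idx_lt: "(i::nat) < m \<Longrightarrow> k < n \<Longrightarrow> i*n+k < m*n"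
proof -
  assume "i < m" "k < n"
  then have "i*n+k < i*n+n" by simp
  also have "\<dots> = (Suc i)*n" by simp
  also have "\<dots> \<le> m*n" using \<open>i<m\<close> by (intro mult_right_mono) auto
  finally show ?thesis .
qed

lemma kron_index:
  assumes "A \<in> carrier_mat m m" "B \<in> carrier_mat n n" "i < m" "j < m" "k < n" "l < n"
  shows "kron A B $$ (i*n+k, j*n+l) = A$$(i,j) * B$$(k,l)"
  using assms idx_lt[of i m k n] idx_lt[of j m l n] unfolding kron_def by simp

lemma kron_carrier:
  assumes "A \<in> carrier_mat m m" "B \<in> carrier_mat n n"
  shows "kron A B \<in> carrier_mat (m*n) (m*n)"
  using assms unfolding kron_def by (intro carrier_matI) auto

lemma prod_entry:
  assumes "X \<in> carrier_mat p q" "Y \<in> carrier_mat q r" "a < p" "c < r"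
  shows "(X*Y)$$(a,c) = (\<Sum>b<q. X$$(a,b) * Y$$(b,c))"
proof -
  have "(X*Y)$$(a,c) = row X a \<bullet> col Y c" using assms by simp
  also have "\<dots> = (\<Sum>b\<in>{0..<q}. row X a $ b * col Y c $ b)" using assms unfolding scalar_prod_def by simp
  also have "\<dots> = (\<Sum>b<q. X$$(a,b) * Y$$(b,c))" unfolding lessThan_atLeast0
    using assms by (intro sum.cong) auto
  finally show ?thesis .
qed

lemma trace_prod:
  assumes "X \<in> carrier_mat p q" "Y \<in> carrier_mat q p"
  shows "mtrace (X*Y) = (\<Sum>a<p. \<Sum>b<q. X$$(a,b) * Y$$(b,a))"
  unfolding mtrace_def using assms prod_entry[OF assms] by (intro sum.cong) auto

definition tp :: "nat \<Rightarrow> complex mat \<Rightarrow> complex mat \<Rightarrow> complex" where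
  "tp n X Y = (\<Sum>i<n. \<Sum>j<n. X$$(i,j) * Y$$(j,i))"

lemma trace_tp: "X \<in> carrier_mat n n \<Longrightarrow> Y \<in> carrier_mat n n \<Longrightarrow> mtrace (X*Y) = tp n X Y"
  unfolding tp_def by (rule trace_prod)

definition Fc :: "nat \<Rightarrow> nat \<Rightarrow> complex mat \<Rightarrow> complex mat \<Rightarrow> complex mat \<Rightarrow> complex" where
  "Fc m n G \<rho> \<sigma> = (\<Sum>i<m. \<Sum>j<m. \<Sum>k<n. \<Sum>l<n. \<rho>$$(i,j) * \<sigma>$$(k,l) * G$$(j*n+l, i*n+k))"

lemma payoff_Fc:
  assumes "\<rho> \<in> carrier_mat m m" "\<sigma> \<in> carrier_mat n n" "G \<in> carrier_mat (m*n) (m*n)"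
  shows "mtrace (kron \<rho> \<sigma> * G) = Fc m n G \<rho> \<sigma>"
proof -
  have K: "kron \<rho> \<sigma> \<in> carrier_mat (m*n) (m*n)" by (rule kron_carrier[OF assms(1,2)])
  have "mtrace (kron \<rho> \<sigma> * G) = (\<Sum>a<m*n. \<Sum>b<m*n. kron \<rho> \<sigma> $$ (a,b) * G$$(b,a))"
    by (rule trace_prod[OF K assms(3)])
  also have "\<dots> = (\<Sum>i<m. \<Sum>k<n. \<Sum>j<m. \<Sum>l<n. kron \<rho> \<sigma> $$ (i*n+k,j*n+l) * G$$(j*n+l,i*n+k))"
    unfolding sum_prod_idx ..
  also have "\<dots> = (\<Sum>i<m. \<Sum>k<n. \<Sum>j<m. \<Sum>l<n. \<rho>$$(i,j) * \<sigma>$$(k,l) * G$$(j*n+l,i*n+k))"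
    using assms by (intro sum.cong refl) (simp add: kron_index)
  also have "\<dots> = Fc m n G \<rho> \<sigma>"
    unfolding Fc_def by (rule sum.cong[OF refl]) (rule sum.swap)
  finally show ?thesis .
qed

definition Mop :: "nat \<Rightarrow> nat \<Rightarrow> complex mat \<Rightarrow> complex mat \<Rightarrow> complex mat" where
  "Mop m n G \<sigma> = ptrace_B m n (kron (1\<^sub>m m) \<sigma> * G)"

definition Nop :: "nat \<Rightarrow> nat \<Rightarrow> complex mat \<Rightarrow> complex mat \<Rightarrow> complex mat" where
  "Nop m n G \<Omega> = ptrace_A m n (kron \<Omega> (1\<^sub>m n) * G)"

lemma Mop_carrier: "Mop m n G \<sigma> \<in> carrier_mat m m"
  unfolding Mop_def ptrace_B_def by simp

lemma Nop_carrier: "Nop m n G \<Omega> \<in> carrier_mat n n"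
  unfolding Nop_def ptrace_A_def by simp

lemma Mop_index:
  assumes "\<sigma> \<in> carrier_mat n n" "G \<in> carrier_mat (m*n) (m*n)" "i < m" "j < m"
  shows "Mop m n G \<sigma> $$ (i,j) = (\<Sum>k<n. \<Sum>l<n. \<sigma>$$(k,l) * G$$(i*n+l, j*n+k))"
proof -
  have I: "1\<^sub>m m \<in> carrier_mat m m" by simp
  have K: "kron (1\<^sub>m m) \<sigma> \<in> carrier_mat (m*n) (m*n)" by (rule kron_carrier[OF I assms(1)])
  have "Mop m n G \<sigma> $$ (i,j) = (\<Sum>k<n. (kron (1\<^sub>m m) \<sigma> * G) $$ (i*n+k, j*n+k))"
    unfolding Mop_def ptrace_B_def using assms by simp
  also have "\<dots> = (\<Sum>k<n. \<Sum>b<m*n. kron (1\<^sub>m m) \<sigma> $$ (i*n+k, b) * G $$ (b, j*n+k))"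
    using assms idx_lt by (intro sum.cong refl prod_entry[OF K assms(2)]) auto
  also have "\<dots> = (\<Sum>k<n. \<Sum>i'<m. \<Sum>l<n. kron (1\<^sub>m m) \<sigma> $$ (i*n+k, i'*n+l) * G $$ (i'*n+l, j*n+k))"
    unfolding sum_prod_idx ..
  also have "\<dots> = (\<Sum>k<n. \<Sum>i'<m. \<Sum>l<n. (if i = i' then \<sigma>$$(k,l) * G $$ (i'*n+l, j*n+k) else 0))"
    using assms by (intro sum.cong refl) (simp add: kron_index[OF I assms(1)])
  also have "\<dots> = (\<Sum>k<n. \<Sum>i'<m. if i = i' then (\<Sum>l<n. \<sigma>$$(k,l) * G $$ (i'*n+l, j*n+k)) else 0)"
    by (intro sum.cong refl) auto
  also have "\<dots> = (\<Sum>k<n. \<Sum>l<n. \<sigma>$$(k,l) * G$$(i*n+l, j*n+k))"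
    using assms(3) by (simp add: sum.delta sum.delta')
  finally show ?thesis .
qed

lemma Nop_index:
  assumes "\<Omega> \<in> carrier_mat m m" "G \<in> carrier_mat (m*n) (m*n)" "k < n" "l < n"
  shows "Nop m n G \<Omega> $$ (k,l) = (\<Sum>i<m. \<Sum>j<m. \<Omega>$$(i,j) * G$$(j*n+k, i*n+l))"
proof -
  have I: "1\<^sub>m n \<in> carrier_mat n n" by simp
  have K: "kron \<Omega> (1\<^sub>m n) \<in> carrier_mat (m*n) (m*n)" by (rule kron_carrier[OF assms(1) I])
  have "Nop m n G \<Omega> $$ (k,l) = (\<Sum>i<m. (kron \<Omega> (1\<^sub>m n) * G) $$ (i*n+k, i*n+l))"
    unfolding Nop_def ptrace_A_def using assms by simp
  also have "\<dots> = (\<Sum>i<m. \<Sum>b<m*n. kron \<Omega> (1\<^sub>m n) $$ (i*n+k, b) * G $$ (b, i*n+l))"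
    using assms idx_lt by (intro sum.cong refl prod_entry[OF K assms(2)]) auto
  also have "\<dots> = (\<Sum>i<m. \<Sum>j<m. \<Sum>l'<n. kron \<Omega> (1\<^sub>m n) $$ (i*n+k, j*n+l') * G $$ (j*n+l', i*n+l))"
    unfolding sum_prod_idx ..
  also have "\<dots> = (\<Sum>i<m. \<Sum>j<m. \<Sum>l'<n. (if k = l' then \<Omega>$$(i,j) * G $$ (j*n+l', i*n+l) else 0))"
    using assms by (intro sum.cong refl) (simp add: kron_index[OF assms(1) I])
  also have "\<dots> = (\<Sum>i<m. \<Sum>j<m. \<Omega>$$(i,j) * G$$(j*n+k, i*n+l))"
    using assms(3) by (simp add: sum.delta sum.delta')
  finally show ?thesis .
qed

lemma tp_Mop:
  assumes "\<rho> \<in> carrier_mat m m" "\<sigma> \<in> carrier_mat n n" "G \<in> carrier_mat (m*n) (m*n)"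
  shows "tp m \<rho> (Mop m n G \<sigma>) = Fc m n G \<rho> \<sigma>"
proof -
  have "tp m \<rho> (Mop m n G \<sigma>) = (\<Sum>i<m. \<Sum>j<m. \<rho>$$(i,j) * (\<Sum>k<n. \<Sum>l<n. \<sigma>$$(k,l) * G$$(j*n+l, i*n+k)))"
    unfolding tp_def using assms by (intro sum.cong refl) (simp add: Mop_index)
  also have "\<dots> = Fc m n G \<rho> \<sigma>"
    unfolding Fc_def by (simp add: sum_distrib_left mult.assoc)
  finally show ?thesis .
qed

lemma sum4_swap: "(\<Sum>k\<in>K. \<Sum>l\<in>L. \<Sum>i\<in>I. \<Sum>j\<in>J. f i j k l) = (\<Sum>i\<in>I. \<Sum>j\<in>J. \<Sum>k\<in>K. \<Sum>l\<in>L. f i j k l)"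
proof -
  have "(\<Sum>k\<in>K. \<Sum>l\<in>L. \<Sum>i\<in>I. \<Sum>j\<in>J. f i j k l) = (\<Sum>k\<in>K. \<Sum>i\<in>I. \<Sum>l\<in>L. \<Sum>j\<in>J. f i j k l)"
    by (rule sum.cong[OF refl]) (rule sum.swap)
  also have "\<dots> = (\<Sum>k\<in>K. \<Sum>i\<in>I. \<Sum>j\<in>J. \<Sum>l\<in>L. f i j k l)"
    by (rule sum.cong[OF refl], rule sum.cong[OF refl]) (rule sum.swap)
  also have "\<dots> = (\<Sum>i\<in>I. \<Sum>k\<in>K. \<Sum>j\<in>J. \<Sum>l\<in>L. f i j k l)"
    by (rule sum.swap)
  also have "\<dots> = (\<Sum>i\<in>I. \<Sum>j\<in>J. \<Sum>k\<in>K. \<Sum>l\<in>L. f i j k l)"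
    by (rule sum.cong[OF refl]) (rule sum.swap)
  finally show ?thesis .
qed

lemma tp_Nop:
  assumes "\<rho> \<in> carrier_mat m m" "\<sigma> \<in> carrier_mat n n" "G \<in> carrier_mat (m*n) (m*n)"
  shows "tp n \<sigma> (Nop m n G \<rho>) = Fc m n G \<rho> \<sigma>"
proof -
  have "tp n \<sigma> (Nop m n G \<rho>) = (\<Sum>k<n. \<Sum>l<n. \<sigma>$$(k,l) * (\<Sum>i<m. \<Sum>j<m. \<rho>$$(i,j) * G$$(j*n+l, i*n+k)))"
    unfolding tp_def using assms by (intro sum.cong refl) (simp add: Nop_index)
  also have "\<dots> = (\<Sum>k<n. \<Sum>l<n. \<Sum>i<m. \<Sum>j<m. \<rho>$$(i,j) * \<sigma>$$(k,l) * G$$(j*n+l, i*n+k))"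
    by (simp add: sum_distrib_left mult.assoc mult.left_commute)
  also have "\<dots> = (\<Sum>i<m. \<Sum>j<m. \<Sum>k<n. \<Sum>l<n. \<rho>$$(i,j) * \<sigma>$$(k,l) * G$$(j*n+l, i*n+k))"
    by (rule sum4_swap)
  finally show ?thesis unfolding Fc_def .
qed




lemma sum_two:
  assumes "(k::nat) < n" "j < n" "k \<noteq> j" "\<And>x. x \<noteq> k \<Longrightarrow> x \<noteq> j \<Longrightarrow> g x = 0"
  shows "(\<Sum>x<n. g x) = g k + g j"
proof -
  have "(\<Sum>x<n. g x) = (\<Sum>x\<in>{k,j}. g x)"
    using assms by (intro sum.mono_neutral_right) auto
  also have "\<dots> = g k + g j" using assms(3) by simp
  finally show ?thesis .
qed

lemma sum_one:
  assumes "(k::nat) < n" "\<And>x. x \<noteq> k \<Longrightarrow> g x = 0"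
  shows "(\<Sum>x<n. g x) = g k"
proof -
  have "(\<Sum>x<n. g x) = (\<Sum>x\<in>{k}. g x)"
    using assms by (intro sum.mono_neutral_right) auto
  then show ?thesis by simp
qed

lemma qf_delta1:
  assumes "k < n"
  shows "qf n r (\<lambda>i. if i = k then 1 else 0) = r k k"
proof -
  have "qf n r (\<lambda>i. if i = k then 1 else 0) = (\<Sum>j<n. cnj 1 * r k j * (if j = k then 1 else 0))"
    unfolding qf_def by (subst sum_one[OF assms]) auto
  also have "\<dots> = cnj 1 * r k k * 1"
    by (subst sum_one[OF assms]) auto
  finally show ?thesis by simp
qed

lemma qf_delta2:
  assumes "k < n" "j < n" "k \<noteq> j"
  shows "qf n r (\<lambda>i. if i = k then a else if i = j then b else 0)
       = cnj a * r k k * a + cnj a * r k j * b + cnj b * r j k * a + cnj b * r j j * b"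
proof -
  let ?w = "\<lambda>i. if i = k then a else if i = j then b else 0"
  have inner: "(\<Sum>y<n. cnj (?w x) * r x y * ?w y) = cnj (?w x) * r x k * a + cnj (?w x) * r x j * b" for x
    using assms by (subst sum_two[OF assms]) auto
  have "qf n r ?w = (\<Sum>x<n. cnj (?w x) * r x k * a + cnj (?w x) * r x j * b)"
    unfolding qf_def inner ..
  also have "\<dots> = (cnj a * r k k * a + cnj a * r k j * b) + (cnj b * r j k * a + cnj b * r j j * b)"
    using assms by (subst sum_two[OF assms]) auto
  finally show ?thesis by simp
qed

lemma psdf_diag:
  assumes "psdf n r" "k < n"
  shows "Im (r k k) = 0" "0 \<le> Re (r k k)" "r k k = complex_of_real (Re (r k k))"
proof -
  have "cnj (r k k) = r k k" using assms unfolding psdf_def by blast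
  then show im: "Im (r k k) = 0" by (metis Reals_cnj_iff complex_is_Real_iff)
  show "0 \<le> Re (r k k)" using assms qf_delta1[OF assms(2), of r] unfolding psdf_def by metis
  show "r k k = complex_of_real (Re (r k k))" using im by (simp add: complex_eq_iff)
qed

lemma psdf_two:
  assumes "psdf n r" "k < n" "j < n" "k \<noteq> j"
  shows "0 \<le> (cmod s)^2 * Re (r k k) + 2 * Re (cnj s * r k j) + Re (r j j)"
proof -
  have h1: "cnj (r k j) = r j k" using assms unfolding psdf_def by blast
  have "0 \<le> Re (qf n r (\<lambda>i. if i = k then s else if i = j then 1 else 0))"
    using assms unfolding psdf_def by blast
  also have "qf n r (\<lambda>i. if i = k then s else if i = j then 1 else 0)
       = cnj s * r k k * s + cnj s * r k j + r j k * s + r j j"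
    by (simp add: qf_delta2[OF assms(2-4)])
  also have "Re (cnj s * r k k * s + cnj s * r k j + r j k * s + r j j)
       = (cmod s)^2 * Re (r k k) + 2 * Re (cnj s * r k j) + Re (r j j)"
  proof -
    have a: "cnj s * r k k * s = complex_of_real ((cmod s)^2) * r k k"
      unfolding complex_norm_square by (simp add: mult.commute mult.left_commute)
    have b: "Re (r j k * s) = Re (cnj s * r k j)"
    proof -
      have "r j k * s = cnj (cnj s * r k j)" using h1 by (metis complex_cnj_cnj complex_cnj_mult mult.commute)
      then show ?thesis by (simp only: cnj.sel(1))
    qed
    show ?thesis unfolding a using b by simp
  qed
  finally show ?thesis .
qed

lemma psdf_entry_bound:
  assumes "psdf n r" "k < n" "j < n"
  shows "cmod (r k j) \<le> (Re (r k k) + Re (r j j)) / 2"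
proof (cases "k = j")
  case True
  have e: "r k k = complex_of_real (Re (r k k))" and nn: "0 \<le> Re (r k k)"
    using psdf_diag[OF assms(1,2)] by auto
  have "cmod (r k k) = Re (r k k)" using e nn by (metis norm_of_real abs_of_nonneg)
  then show ?thesis using True by simp
next
  case False
  show ?thesis
  proof (cases "r k j = 0")
    case True
    then show ?thesis using psdf_diag(2)[OF assms(1,2)] psdf_diag(2)[OF assms(1,3)] by simp
  next
    case nz: False
    let ?s = "- r k j / complex_of_real (cmod (r k j))"
    have c: "cmod (r k j) > 0" using nz by simp
    have s1: "cmod ?s = 1" using c by (simp add: norm_divide)
    have "cnj ?s * r k j = - complex_of_real (cmod (r k j))"
    proof -
      have "cnj ?s * r k j = - (cnj (r k j) * r k j) / complex_of_real (cmod (r k j))"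
        by (simp add: complex_cnj_divide)
      also have "cnj (r k j) * r k j = complex_of_real ((cmod (r k j))^2)"
        by (metis complex_norm_square mult.commute)
      finally show ?thesis using c by (simp add: power2_eq_square)
    qed
    then have "Re (cnj ?s * r k j) = - cmod (r k j)" by simp
    then show ?thesis using psdf_two[OF assms False, of ?s] s1 by simp
  qed
qed

lemma psdf_zero_row:
  assumes "psdf n r" "k < n" "j < n" "Re (r k k) = 0"
  shows "r k j = 0"
proof (cases "k = j")
  case True
  then show ?thesis using psdf_diag(3)[OF assms(1,2)] assms(4) by simp
next
  case False
  show ?thesis
  proof (rule ccontr)
    assume nz: "r k j \<noteq> 0"
    define c where "c = (cmod (r k j))^2"
    have c: "c > 0" using nz unfolding c_def by simp
    define x where "x = (Re (r j j) + 1) / (2 * c)"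
    let ?s = "- complex_of_real x * r k j"
    have e1: "cnj ?s * r k j = - complex_of_real x * (cnj (r k j) * r k j)" by simp
    have e2: "cnj (r k j) * r k j = complex_of_real c"
      unfolding c_def by (metis complex_norm_square mult.commute)
    have "Re (cnj ?s * r k j) = - x * c" unfolding e1 e2 by simp
    then have "0 \<le> 2 * (- x * c) + Re (r j j)" using psdf_two[OF assms(1-3) False, of ?s] assms(4) by simp
    also have "2 * (- x * c) = - (Re (r j j) + 1)" unfolding x_def using c by (simp add: field_simps)
    finally show False by simp
  qed
qed

definition Tp :: "nat \<Rightarrow> (nat \<Rightarrow> nat \<Rightarrow> complex) \<Rightarrow> (nat \<Rightarrow> nat \<Rightarrow> complex) \<Rightarrow> complex" where
  "Tp n r q = (\<Sum>i<n. \<Sum>j<n. r i j * q j i)"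

lemma sum_if_const: "(\<Sum>j\<in>A. if P then f j else 0) = (if P then (\<Sum>j\<in>A. f j) else 0)"
  by (cases P) auto

lemma qf_shift:
  assumes "k < n"
  shows "qf n r (\<lambda>i. w i - (if i = k then t else 0))
       = qf n r w - cnj t * (\<Sum>j<n. r k j * w j) - t * (\<Sum>i<n. cnj (w i) * r i k) + cnj t * t * r k k"
proof -
  have e: "cnj (w i - (if i = k then t else 0)) * r i j * (w j - (if j = k then t else 0))
     = cnj (w i) * r i j * w j - (if i = k then cnj t * (r k j * w j) else 0)
       - (if j = k then t * (cnj (w i) * r i k) else 0)
       + (if i = k then (if j = k then cnj t * t * r k k else 0) else 0)" for i j
    by (auto simp: algebra_simps)
  show ?thesis unfolding qf_def e
    using assms by (simp add: sum.distrib sum_subtractf sum.delta sum.delta' sum_distrib_left sum_if_const)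
qed

lemma F1_fun:
  assumes q: "psdf n q"
  shows "d \<le> n \<Longrightarrow> psdf n r \<Longrightarrow> (\<forall>i<n. \<forall>j<n. (i < n - d \<or> j < n - d) \<longrightarrow> r i j = 0) \<Longrightarrow> 0 \<le> Re (Tp n r q)"
proof (induction d arbitrary: r)
  case 0
  then have "Tp n r q = 0" unfolding Tp_def by (intro sum.neutral ballI) auto
  then show ?case by simp
next
  case (Suc d)
  define k where "k = n - Suc d"
  have k: "k < n" and nd: "n - d = Suc k" using Suc.prems(1) unfolding k_def by auto
  have rP: "psdf n r" by fact
  have herm: "\<And>i j. i < n \<Longrightarrow> j < n \<Longrightarrow> cnj (r i j) = r j i" using rP unfolding psdf_def by blast
  have z: "\<And>i j. i < n \<Longrightarrow> j < n \<Longrightarrow> (i < k \<or> j < k) \<Longrightarrow> r i j = 0" using Suc.prems(3) unfolding k_def by blast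
  show ?case
  proof (cases "Re (r k k) = 0")
    case True
    have zk: "r k j = 0" if "j < n" for j using psdf_zero_row[OF rP k that True] .
    have zk': "r j k = 0" if "j < n" for j using herm[OF k that] zk[OF that] by simp
    have "\<forall>i<n. \<forall>j<n. (i < n - d \<or> j < n - d) \<longrightarrow> r i j = 0"
    proof (intro allI impI)
      fix i j assume "i < n" "j < n" "i < n - d \<or> j < n - d"
      then have "i < k \<or> j < k \<or> i = k \<or> j = k" unfolding nd by auto
      then show "r i j = 0" using z zk zk' \<open>i<n\<close> \<open>j<n\<close> by blast
    qed
    then show ?thesis using Suc.IH[OF _ rP] Suc.prems(1) by simp
  next
    case False
    define a where "a = Re (r k k)"
    have a: "a > 0" using False psdf_diag(2)[OF rP k] unfolding a_def by simp
    have rkk: "r k k = complex_of_real a" unfolding a_def by (rule psdf_diag(3)[OF rP k])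
    define r' where "r' = (\<lambda>i j. r i j - r i k * r k j / complex_of_real a)"
    have r'z: "\<forall>i<n. \<forall>j<n. (i < n - d \<or> j < n - d) \<longrightarrow> r' i j = 0"
    proof (intro allI impI)
      fix i j assume i: "i < n" and j: "j < n" and "i < n - d \<or> j < n - d"
      then have "i < k \<or> j < k \<or> i = k \<or> j = k" unfolding nd by auto
      then show "r' i j = 0"
      proof (elim disjE)
        assume "i < k" then show ?thesis using z[OF i j] z[OF i k] unfolding r'_def by simp
      next
        assume "j < k" then show ?thesis using z[OF i j] z[OF k j] unfolding r'_def by simp
      next
        assume "i = k" then show ?thesis unfolding r'_def using a rkk by simp
      next
        assume "j = k" then show ?thesis unfolding r'_def using a rkk by simp
      qed
    qed
    have r'P: "psdf n r'"
      unfolding psdf_def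
    proof (intro conjI allI impI)
      fix i j assume i: "i < n" and j: "j < n"
      show "cnj (r' i j) = r' j i"
        unfolding r'_def using herm[OF i j] herm[OF i k] herm[OF k j] by (simp add: mult.commute)
    next
      fix w
      define \<gamma> where "\<gamma> = (\<Sum>j<n. r k j * w j)"
      define \<beta> where "\<beta> = (\<Sum>i<n. cnj (w i) * r i k)"
      have cb: "cnj \<beta> = \<gamma>" unfolding \<beta>_def \<gamma>_def using herm k
        by (auto intro!: sum.cong simp: mult.commute)
      define t where "t = \<gamma> / complex_of_real a"
      have ct: "cnj t = \<beta> / complex_of_real a" unfolding t_def using cb
        by (metis complex_cnj_cnj complex_cnj_divide complex_cnj_complex_of_real)
      have "qf n r' w = qf n r w - \<beta> * \<gamma> / complex_of_real a"
        unfolding qf_def r'_def \<beta>_def \<gamma>_def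
        by (simp add: algebra_simps sum_subtractf sum_distrib_left sum_distrib_right sum_divide_distrib)
      also have "\<dots> = qf n r (\<lambda>i. w i - (if i = k then t else 0))"
        unfolding qf_shift[OF k] \<gamma>_def[symmetric] \<beta>_def[symmetric] ct rkk t_def using a
        by (simp add: field_simps)
      finally show "0 \<le> Re (qf n r' w)" using rP unfolding psdf_def by simp
    qed
    have ih: "0 \<le> Re (Tp n r' q)" using Suc.IH[OF _ r'P r'z] Suc.prems(1) by simp
    define u where "u = (\<lambda>i. r i k)"
    have "Tp n r q = Tp n r' q + (\<Sum>i<n. \<Sum>j<n. r i k * r k j * q j i) / complex_of_real a"
      unfolding Tp_def r'_def
      by (simp add: algebra_simps sum_subtractf sum.distrib sum_divide_distrib)
    also have "(\<Sum>i<n. \<Sum>j<n. r i k * r k j * q j i) = qf n q u"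
    proof -
      have "(\<Sum>i<n. \<Sum>j<n. r i k * r k j * q j i) = (\<Sum>i<n. \<Sum>j<n. cnj (u j) * q j i * u i)"
        unfolding u_def using herm k by (intro sum.cong refl) (simp add: mult.commute mult.left_commute)
      also have "\<dots> = qf n q u" unfolding qf_def by (rule sum.swap)
      finally show ?thesis .
    qed
    finally have "Re (Tp n r q) = Re (Tp n r' q) + Re (qf n q u) / a"
      by (simp add: Re_divide_of_real)
    moreover have "0 \<le> Re (qf n q u)" using q unfolding psdf_def by blast
    ultimately show ?thesis using ih a by simp
  qed
qed

lemma F1:
  assumes "psdf n r" "psdf n q"
  shows "0 \<le> Re (Tp n r q)"
  using F1_fun[OF assms(2), of n r] assms(1) by simp

lemma F1_mat:
  assumes "psd_mat n A" "psd_mat n B"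
  shows "0 \<le> Re (tp n A B)"
proof -
  have "tp n A B = Tp n (\<lambda>i j. A$$(i,j)) (\<lambda>i j. B$$(i,j))" unfolding tp_def Tp_def ..
  then show ?thesis using F1 assms psd_iff by metis
qed




lemma mtrace_carrier: "A \<in> carrier_mat n n \<Longrightarrow> mtrace A = (\<Sum>i<n. A$$(i,i))"
  unfolding mtrace_def by simp

lemma psd_trace:
  assumes "psd_mat n A"
  shows "mtrace A = complex_of_real (Re (mtrace A))" "0 \<le> Re (mtrace A)"
proof -
  have A: "A \<in> carrier_mat n n" and P: "psdf n (\<lambda>i j. A$$(i,j))" using assms psd_iff by auto
  have t: "mtrace A = (\<Sum>i<n. A$$(i,i))" by (rule mtrace_carrier[OF A])
  have "Im (mtrace A) = 0" unfolding t Im_sum using psdf_diag(1)[OF P] by simp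
  then show "mtrace A = complex_of_real (Re (mtrace A))" by (simp add: complex_eq_iff)
  show "0 \<le> Re (mtrace A)" unfolding t Re_sum using psdf_diag(2)[OF P] by (intro sum_nonneg) simp
qed

lemma psd_entry_le_trace:
  assumes "psd_mat n A" "i < n" "j < n"
  shows "cmod (A$$(i,j)) \<le> Re (mtrace A)"
proof -
  have A: "A \<in> carrier_mat n n" and P: "psdf n (\<lambda>i j. A$$(i,j))" using assms psd_iff by auto
  have t: "Re (mtrace A) = (\<Sum>k<n. Re (A$$(k,k)))" unfolding mtrace_carrier[OF A] Re_sum ..
  have nn: "\<And>k. k < n \<Longrightarrow> 0 \<le> Re (A$$(k,k))" using psdf_diag(2)[OF P] by simp
  have le: "Re (A$$(k,k)) \<le> Re (mtrace A)" if "k < n" for k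
    unfolding t using nn that by (intro member_le_sum) auto
  have "cmod (A$$(i,j)) \<le> (Re (A$$(i,i)) + Re (A$$(j,j))) / 2"
    using psdf_entry_bound[OF P assms(2,3)] by simp
  also have "\<dots> \<le> Re (mtrace A)" using le[OF assms(2)] le[OF assms(3)] by simp
  finally show ?thesis .
qed

lemma density_entry_bound:
  assumes "A \<in> density_mats n" "i < n" "j < n"
  shows "cmod (A$$(i,j)) \<le> 1"
  using psd_entry_le_trace[of n A i j] assms unfolding density_mats_def by simp

lemma density_carrier: "A \<in> density_mats n \<Longrightarrow> A \<in> carrier_mat n n"
  unfolding density_mats_def psd_mat_def hermitian_mat_def by auto

definition Gb :: "nat \<Rightarrow> nat \<Rightarrow> complex mat \<Rightarrow> real" where
  "Gb m n G = (\<Sum>i<m. \<Sum>j<m. \<Sum>k<n. \<Sum>l<n. cmod (G$$(j*n+l, i*n+k)))"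

lemma Fc_bound:
  assumes "\<rho> \<in> density_mats m" "\<sigma> \<in> density_mats n"
  shows "cmod (Fc m n G \<rho> \<sigma>) \<le> Gb m n G"
proof -
  have "cmod (Fc m n G \<rho> \<sigma>) \<le> (\<Sum>i<m. \<Sum>j<m. \<Sum>k<n. \<Sum>l<n. cmod (\<rho>$$(i,j) * \<sigma>$$(k,l) * G$$(j*n+l, i*n+k)))"
    unfolding Fc_def
    by (rule order_trans[OF norm_sum], rule sum_mono, rule order_trans[OF norm_sum], rule sum_mono,
        rule order_trans[OF norm_sum], rule sum_mono, rule norm_sum)
  also have "\<dots> \<le> Gb m n G" unfolding Gb_def
  proof (intro sum_mono)
    fix i j k l assume "i \<in> {..<m}" "j \<in> {..<m}" "k \<in> {..<n}" "l \<in> {..<n}"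
    then have b1: "cmod (\<rho>$$(i,j)) \<le> 1" and b2: "cmod (\<sigma>$$(k,l)) \<le> 1"
      using density_entry_bound assms by auto
    have "cmod (\<rho>$$(i,j) * \<sigma>$$(k,l) * G$$(j*n+l, i*n+k)) = cmod (\<rho>$$(i,j)) * cmod (\<sigma>$$(k,l)) * cmod (G$$(j*n+l, i*n+k))"
      by (simp add: norm_mult)
    also have "\<dots> \<le> 1 * 1 * cmod (G$$(j*n+l, i*n+k))"
      using b1 b2 by (intro mult_right_mono mult_mono) auto
    finally show "cmod (\<rho>$$(i,j) * \<sigma>$$(k,l) * G$$(j*n+l, i*n+k)) \<le> cmod (G$$(j*n+l, i*n+k))" by simp
  qed
  finally show ?thesis .
qed

lemma payoff_eq:
  assumes "\<rho> \<in> carrier_mat m m" "\<sigma> \<in> carrier_mat n n" "G \<in> carrier_mat (m*n) (m*n)"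
  shows "payoff G \<rho> \<sigma> = Re (Fc m n G \<rho> \<sigma>)"
  unfolding payoff_def payoff_Fc[OF assms] ..

lemma payoff_bdd:
  assumes "\<sigma> \<in> density_mats n" "G \<in> carrier_mat (m*n) (m*n)"
  shows "bdd_below {payoff G \<rho>A \<sigma> | \<rho>A. \<rho>A \<in> density_mats m}"
proof (rule bdd_belowI[of _ "- Gb m n G"])
  fix x assume "x \<in> {payoff G \<rho>A \<sigma> | \<rho>A. \<rho>A \<in> density_mats m}"
  then obtain \<rho> where r: "\<rho> \<in> density_mats m" and x: "x = payoff G \<rho> \<sigma>" by auto
  have "x = Re (Fc m n G \<rho> \<sigma>)" unfolding x
    by (rule payoff_eq[OF density_carrier[OF r] density_carrier[OF assms(1)] assms(2)])
  moreover have "- cmod (Fc m n G \<rho> \<sigma>) \<le> Re (Fc m n G \<rho> \<sigma>)"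
    using abs_Re_le_cmod[of "Fc m n G \<rho> \<sigma>"] by linarith
  ultimately show "- Gb m n G \<le> x" using Fc_bound[OF r assms(1), of G] by linarith
qed

lemma sec_le:
  assumes "\<sigma> \<in> density_mats n" "G \<in> carrier_mat (m*n) (m*n)" "\<rho> \<in> density_mats m"
  shows "sec_value_B m G \<sigma> \<le> payoff G \<rho> \<sigma>"
  unfolding sec_value_B_def using assms(3) by (intro cInf_lower payoff_bdd[OF assms(1,2)]) auto

lemma sec_ge:
  assumes "density_mats m \<noteq> {}" "\<And>\<rho>. \<rho> \<in> density_mats m \<Longrightarrow> c \<le> payoff G \<rho> \<sigma>"
  shows "c \<le> sec_value_B m G \<sigma>"
  unfolding sec_value_B_def using assms by (intro cInf_greatest) auto

definition rank1 :: "nat \<Rightarrow> (nat \<Rightarrow> complex) \<Rightarrow> complex mat" where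
  "rank1 n w = mat n n (\<lambda>(i,j). w i * cnj (w j) / complex_of_real (\<Sum>k<n. (cmod (w k))^2))"

lemma rank1_density:
  assumes "(\<Sum>k<n. (cmod (w k))^2) > 0"
  shows "rank1 n w \<in> density_mats n"
proof -
  define S where "S = (\<Sum>k<n. (cmod (w k))^2)"
  have S: "S > 0" using assms unfolding S_def .
  have C: "rank1 n w \<in> carrier_mat n n" unfolding rank1_def by simp
  have idx: "rank1 n w $$ (i,j) = w i * cnj (w j) / complex_of_real S" if "i < n" "j < n" for i j
    using that unfolding rank1_def S_def by simp
  have P: "psdf n (\<lambda>i j. rank1 n w $$ (i,j))"
    unfolding psdf_def
  proof (intro conjI allI impI)
    fix i j assume "i < n" "j < n"
    then show "cnj (rank1 n w $$ (i, j)) = rank1 n w $$ (j, i)" by (simp add: idx mult.commute)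
  next
    fix v
    define b where "b = (\<Sum>i<n. cnj (v i) * w i)"
    have "qf n (\<lambda>i j. rank1 n w $$ (i,j)) v = (\<Sum>i<n. \<Sum>j<n. (cnj (v i) * w i) * cnj (cnj (v j) * w j) / complex_of_real S)"
      unfolding qf_def by (intro sum.cong refl) (simp add: idx mult.commute mult.left_commute)
    also have "\<dots> = b * cnj b / complex_of_real S"
      unfolding b_def cnj_sum sum_distrib_right sum_divide_distrib
      by (intro sum.cong refl) (simp add: sum_distrib_left sum_divide_distrib)
    also have "\<dots> = complex_of_real ((cmod b)^2 / S)"
      by (simp only: of_real_divide complex_norm_square)
    finally show "0 \<le> Re (qf n (\<lambda>i j. rank1 n w $$ (i, j)) v)" using S by simp
  qed
  have "mtrace (rank1 n w) = (\<Sum>i<n. w i * cnj (w i) / complex_of_real S)"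
    unfolding mtrace_carrier[OF C] by (intro sum.cong refl) (simp add: idx)
  also have "\<dots> = complex_of_real (\<Sum>i<n. (cmod (w i))^2) / complex_of_real S"
    by (simp only: of_real_sum complex_norm_square sum_divide_distrib)
  also have "\<dots> = 1" unfolding S_def[symmetric] using S by simp
  finally show ?thesis unfolding density_mats_def using C P psd_iff by auto
qed

lemma tp_rank1:
  assumes "A \<in> carrier_mat n n"
  shows "tp n (rank1 n w) A = qf n (\<lambda>i j. A$$(i,j)) w / complex_of_real (\<Sum>k<n. (cmod (w k))^2)"
proof -
  have "tp n (rank1 n w) A = (\<Sum>i<n. \<Sum>j<n. w i * cnj (w j) * A$$(j,i) / complex_of_real (\<Sum>k<n. (cmod (w k))^2))"
    unfolding tp_def rank1_def by (intro sum.cong refl) simp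
  also have "\<dots> = (\<Sum>j<n. \<Sum>i<n. cnj (w j) * A$$(j,i) * w i) / complex_of_real (\<Sum>k<n. (cmod (w k))^2)"
    by (subst sum.swap) (simp add: sum_divide_distrib mult.commute mult.left_commute)
  finally show ?thesis unfolding qf_def .
qed

lemma density_nonempty: "n \<ge> 1 \<Longrightarrow> density_mats n \<noteq> {}"
proof -
  assume n: "n \<ge> 1"
  have "(\<Sum>k<n. (cmod (if k = 0 then 1 else 0))^2) = (1::real)"
    using n by (subst sum_one[of 0 n]) auto
  then have "rank1 n (\<lambda>k. if k = 0 then 1 else 0) \<in> density_mats n"
    by (intro rank1_density) simp
  then show ?thesis by blast
qed

lemma tp_minus_id:
  assumes "\<rho> \<in> carrier_mat n n" "X \<in> carrier_mat n n"
  shows "tp n \<rho> (X - complex_of_real c \<cdot>\<^sub>m 1\<^sub>m n) = tp n \<rho> X - complex_of_real c * mtrace \<rho>"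
    and "tp n \<rho> (complex_of_real c \<cdot>\<^sub>m 1\<^sub>m n - X) = complex_of_real c * mtrace \<rho> - tp n \<rho> X"
proof -
  have "tp n \<rho> (X - complex_of_real c \<cdot>\<^sub>m 1\<^sub>m n) = (\<Sum>i<n. \<Sum>j<n. \<rho>$$(i,j) * X$$(j,i) - (if j = i then complex_of_real c * \<rho>$$(i,i) else 0))"
    unfolding tp_def using assms by (intro sum.cong refl) (auto simp: algebra_simps)
  also have "\<dots> = tp n \<rho> X - complex_of_real c * mtrace \<rho>"
    unfolding tp_def mtrace_carrier[OF assms(1)] by (simp add: sum_subtractf sum.delta sum_distrib_left)
  finally show "tp n \<rho> (X - complex_of_real c \<cdot>\<^sub>m 1\<^sub>m n) = tp n \<rho> X - complex_of_real c * mtrace \<rho>" .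
  have "tp n \<rho> (complex_of_real c \<cdot>\<^sub>m 1\<^sub>m n - X) = (\<Sum>i<n. \<Sum>j<n. (if j = i then complex_of_real c * \<rho>$$(i,i) else 0) - \<rho>$$(i,j) * X$$(j,i))"
    unfolding tp_def using assms by (intro sum.cong refl) (auto simp: algebra_simps)
  also have "\<dots> = complex_of_real c * mtrace \<rho> - tp n \<rho> X"
    unfolding tp_def mtrace_carrier[OF assms(1)] by (simp add: sum_subtractf sum.delta sum_distrib_left)
  finally show "tp n \<rho> (complex_of_real c \<cdot>\<^sub>m 1\<^sub>m n - X) = complex_of_real c * mtrace \<rho> - tp n \<rho> X" .
qed

lemma hermitian_add:
  assumes "hermitian_mat N A" "hermitian_mat N B"
  shows "hermitian_mat N (A + B)"
proof -
  have A: "A \<in> carrier_mat N N" and hA: "\<forall>i<N. \<forall>j<N. cnj (A$$(i,j)) = A$$(j,i)" using assms(1) hermitian_iff by auto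
  have B: "B \<in> carrier_mat N N" and hB: "\<forall>i<N. \<forall>j<N. cnj (B$$(i,j)) = B$$(j,i)" using assms(2) hermitian_iff by auto
  show ?thesis unfolding hermitian_iff using A B hA hB by auto
qed

lemma Mop_herm:
  assumes "hermitian_mat (m*n) G" "hermitian_mat n \<sigma>"
  shows "hermitian_mat m (Mop m n G \<sigma>)"
proof -
  have G: "G \<in> carrier_mat (m*n) (m*n)" and hG: "\<forall>i<m*n. \<forall>j<m*n. cnj (G$$(i,j)) = G$$(j,i)" using assms(1) hermitian_iff by auto
  have S: "\<sigma> \<in> carrier_mat n n" and hS: "\<forall>i<n. \<forall>j<n. cnj (\<sigma>$$(i,j)) = \<sigma>$$(j,i)" using assms(2) hermitian_iff by auto
  have "cnj (Mop m n G \<sigma> $$ (i,j)) = Mop m n G \<sigma> $$ (j,i)" if "i < m" "j < m" for i j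
  proof -
    have "cnj (Mop m n G \<sigma> $$ (i,j)) = (\<Sum>k<n. \<Sum>l<n. \<sigma>$$(l,k) * G$$(j*n+k, i*n+l))"
      unfolding Mop_index[OF S G that] using hS hG idx_lt that
      by (simp add: cnj_sum)
    also have "\<dots> = Mop m n G \<sigma> $$ (j,i)"
      unfolding Mop_index[OF S G that(2,1)] by (rule sum.swap)
    finally show ?thesis .
  qed
  then show ?thesis unfolding hermitian_iff using Mop_carrier by blast
qed

lemma Nop_herm:
  assumes "hermitian_mat (m*n) G" "hermitian_mat m \<Omega>"
  shows "hermitian_mat n (Nop m n G \<Omega>)"
proof -
  have G: "G \<in> carrier_mat (m*n) (m*n)" and hG: "\<forall>i<m*n. \<forall>j<m*n. cnj (G$$(i,j)) = G$$(j,i)" using assms(1) hermitian_iff by auto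
  have S: "\<Omega> \<in> carrier_mat m m" and hS: "\<forall>i<m. \<forall>j<m. cnj (\<Omega>$$(i,j)) = \<Omega>$$(j,i)" using assms(2) hermitian_iff by auto
  have "cnj (Nop m n G \<Omega> $$ (k,l)) = Nop m n G \<Omega> $$ (l,k)" if "k < n" "l < n" for k l
  proof -
    have "cnj (Nop m n G \<Omega> $$ (k,l)) = (\<Sum>i<m. \<Sum>j<m. \<Omega>$$(j,i) * G$$(i*n+l, j*n+k))"
      unfolding Nop_index[OF S G that] using hS hG idx_lt that
      by (simp add: cnj_sum)
    also have "\<dots> = Nop m n G \<Omega> $$ (l,k)"
      unfolding Nop_index[OF S G that(2,1)] by (rule sum.swap)
    finally show ?thesis .
  qed
  then show ?thesis unfolding hermitian_iff using Nop_carrier by blast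
qed




lemma comb_index:
  assumes "A \<in> carrier_mat n n" "B \<in> carrier_mat n n" "i < n" "j < n"
  shows "(complex_of_real a \<cdot>\<^sub>m A + complex_of_real b \<cdot>\<^sub>m B) $$ (i,j) = complex_of_real a * A$$(i,j) + complex_of_real b * B$$(i,j)"
  using assms by simp

lemma comb_carrier:
  assumes "A \<in> carrier_mat n n" "B \<in> carrier_mat n n"
  shows "complex_of_real a \<cdot>\<^sub>m A + complex_of_real b \<cdot>\<^sub>m B \<in> carrier_mat n n"
  using assms by simp

lemma psd_comb:
  assumes "psd_mat n A" "psd_mat n B" "0 \<le> a" "0 \<le> b"
  shows "psd_mat n (complex_of_real a \<cdot>\<^sub>m A + complex_of_real b \<cdot>\<^sub>m B)"
proof -
  have A: "A \<in> carrier_mat n n" and PA: "psdf n (\<lambda>i j. A$$(i,j))" using assms(1) psd_iff by auto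
  have B: "B \<in> carrier_mat n n" and PB: "psdf n (\<lambda>i j. B$$(i,j))" using assms(2) psd_iff by auto
  let ?C = "complex_of_real a \<cdot>\<^sub>m A + complex_of_real b \<cdot>\<^sub>m B"
  have hA: "\<And>i j. i < n \<Longrightarrow> j < n \<Longrightarrow> cnj (A$$(i,j)) = A$$(j,i)" using PA unfolding psdf_def by blast
  have hB: "\<And>i j. i < n \<Longrightarrow> j < n \<Longrightarrow> cnj (B$$(i,j)) = B$$(j,i)" using PB unfolding psdf_def by blast
  have "psdf n (\<lambda>i j. ?C$$(i,j))"
    unfolding psdf_def
  proof (intro conjI allI impI)
    fix i j assume "i < n" "j < n"
    then show "cnj (?C$$(i,j)) = ?C$$(j,i)" using hA hB A B by simp
  next
    fix w
    have "qf n (\<lambda>i j. ?C$$(i,j)) w = qf n (\<lambda>i j. complex_of_real a * A$$(i,j) + complex_of_real b * B$$(i,j)) w"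
      using A B by (intro qf_cong_r) simp
    also have "\<dots> = complex_of_real a * qf n (\<lambda>i j. A$$(i,j)) w + complex_of_real b * qf n (\<lambda>i j. B$$(i,j)) w"
      unfolding qf_def by (simp add: algebra_simps sum.distrib sum_distrib_left)
    finally have "Re (qf n (\<lambda>i j. ?C$$(i,j)) w) = a * Re (qf n (\<lambda>i j. A$$(i,j)) w) + b * Re (qf n (\<lambda>i j. B$$(i,j)) w)"
      by simp
    moreover have "0 \<le> Re (qf n (\<lambda>i j. A$$(i,j)) w)" "0 \<le> Re (qf n (\<lambda>i j. B$$(i,j)) w)"
      using PA PB unfolding psdf_def by blast+
    ultimately show "0 \<le> Re (qf n (\<lambda>i j. ?C$$(i,j)) w)" using assms(3,4) by simp
  qed
  then show ?thesis using psd_iff comb_carrier[OF A B] by blast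
qed

lemma trace_comb:
  assumes "A \<in> carrier_mat n n" "B \<in> carrier_mat n n"
  shows "mtrace (complex_of_real a \<cdot>\<^sub>m A + complex_of_real b \<cdot>\<^sub>m B) = complex_of_real a * mtrace A + complex_of_real b * mtrace B"
  unfolding mtrace_carrier[OF comb_carrier[OF assms]] mtrace_carrier[OF assms(1)] mtrace_carrier[OF assms(2)]
  using assms by (simp add: sum.distrib sum_distrib_left)

lemma density_comb:
  assumes "A \<in> density_mats n" "B \<in> density_mats n" "0 \<le> t" "t \<le> 1"
  shows "complex_of_real (1 - t) \<cdot>\<^sub>m A + complex_of_real t \<cdot>\<^sub>m B \<in> density_mats n"
proof -
  have "psd_mat n (complex_of_real (1 - t) \<cdot>\<^sub>m A + complex_of_real t \<cdot>\<^sub>m B)"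
    using assms unfolding density_mats_def by (intro psd_comb) auto
  moreover have "mtrace (complex_of_real (1 - t) \<cdot>\<^sub>m A + complex_of_real t \<cdot>\<^sub>m B) = 1"
    using assms density_carrier unfolding density_mats_def
    by (subst trace_comb) (auto simp: algebra_simps)
  ultimately show ?thesis unfolding density_mats_def by simp
qed

lemma psd_zero: "psd_mat n (0\<^sub>m n n)"
  unfolding psd_iff psdf_def qf_def by simp

lemma Nop_comb:
  assumes "A \<in> carrier_mat m m" "B \<in> carrier_mat m m" "G \<in> carrier_mat (m*n) (m*n)" "k < n" "l < n"
  shows "Nop m n G (complex_of_real a \<cdot>\<^sub>m A + complex_of_real b \<cdot>\<^sub>m B) $$ (k,l)
       = complex_of_real a * Nop m n G A $$ (k,l) + complex_of_real b * Nop m n G B $$ (k,l)"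
  unfolding Nop_index[OF comb_carrier[OF assms(1,2)] assms(3-5)] Nop_index[OF assms(1) assms(3-5)] Nop_index[OF assms(2) assms(3-5)]
  using assms(1,2) by (simp add: algebra_simps sum.distrib sum_distrib_left)

definition Sf :: "nat \<Rightarrow> nat \<Rightarrow> complex mat \<Rightarrow> real \<Rightarrow> complex mat \<Rightarrow> complex mat \<Rightarrow> nat \<Rightarrow> nat \<Rightarrow> complex" where
  "Sf m n G v \<Omega> P k l = Nop m n G \<Omega> $$ (k,l) - (if k = l then complex_of_real v else 0) + P $$ (k,l)"

definition Phi :: "nat \<Rightarrow> nat \<Rightarrow> complex mat \<Rightarrow> real \<Rightarrow> complex mat \<Rightarrow> complex mat \<Rightarrow> real" where
  "Phi m n G v \<Omega> P = (\<Sum>k<n. \<Sum>l<n. (cmod (Sf m n G v \<Omega> P k l))^2)"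

definition ip :: "nat \<Rightarrow> (nat \<Rightarrow> nat \<Rightarrow> complex) \<Rightarrow> (nat \<Rightarrow> nat \<Rightarrow> complex) \<Rightarrow> real" where
  "ip n a b = (\<Sum>k<n. \<Sum>l<n. Re (cnj (a k l) * b k l))"

lemma cmod_add_sq: "(cmod (z + w))^2 = (cmod z)^2 + 2 * Re (cnj z * w) + (cmod w)^2"
  unfolding cmod_power2 by (simp add: power2_eq_square algebra_simps)

lemma var_real:
  fixes a b :: real
  assumes "\<And>t. 0 < t \<Longrightarrow> t \<le> 1 \<Longrightarrow> 0 \<le> 2*t*a + t^2*b"
  shows "0 \<le> a"
proof (rule ccontr)
  assume "\<not> 0 \<le> a"
  then have a: "a < 0" by simp
  define t where "t = min 1 (- a / (\<bar>b\<bar> + 1))"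
  have t0: "0 < t" unfolding t_def using a by (simp add: field_simps)
  have t1: "t \<le> 1" unfolding t_def by simp
  have tb: "t * \<bar>b\<bar> \<le> - a"
  proof -
    have "t \<le> - a / (\<bar>b\<bar> + 1)" unfolding t_def by simp
    then have "t * (\<bar>b\<bar> + 1) \<le> - a" by (simp add: field_simps)
    then show ?thesis using t0 by (simp add: algebra_simps)
  qed
  have "2*t*a + t^2*b \<le> 2*t*a + t * (t * \<bar>b\<bar>)"
    using t0 by (simp add: power2_eq_square mult_left_mono)
  also have "\<dots> \<le> 2*t*a + t * (- a)" using tb t0 by (intro add_left_mono mult_left_mono) auto
  also have "\<dots> = t * a" by simp
  also have "\<dots> < 0" using t0 a by (simp add: mult_pos_neg)
  finally show False using assms[OF t0 t1] by simp
qed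

lemma Phi_expand:
  "(\<Sum>k<n. \<Sum>l<n. (cmod (s k l + complex_of_real t * d k l))^2)
   = (\<Sum>k<n. \<Sum>l<n. (cmod (s k l))^2) + 2 * t * ip n s d + t^2 * (\<Sum>k<n. \<Sum>l<n. (cmod (d k l))^2)"
proof -
  have e: "(cmod (s k l + complex_of_real t * d k l))^2 = (cmod (s k l))^2 + 2 * t * Re (cnj (s k l) * d k l) + t^2 * (cmod (d k l))^2" for k l
    unfolding cmod_add_sq by (simp add: norm_mult power_mult_distrib mult.left_commute)
  show ?thesis unfolding e ip_def by (simp only: sum.distrib sum_distrib_left)
qed

lemma variational:
  assumes G: "G \<in> carrier_mat (m*n) (m*n)"
    and O0: "\<Omega>0 \<in> density_mats m" and P0: "psd_mat n P0"
    and glob: "\<And>\<Omega> P. \<Omega> \<in> density_mats m \<Longrightarrow> psd_mat n P \<Longrightarrow> Phi m n G v \<Omega>0 P0 \<le> Phi m n G v \<Omega> P"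
    and O1: "\<Omega>1 \<in> density_mats m" and P1: "psd_mat n P1"
  shows "0 \<le> ip n (Sf m n G v \<Omega>0 P0) (\<lambda>k l. Sf m n G v \<Omega>1 P1 k l - Sf m n G v \<Omega>0 P0 k l)"
proof -
  let ?s = "Sf m n G v \<Omega>0 P0"
  let ?d = "\<lambda>k l. Sf m n G v \<Omega>1 P1 k l - Sf m n G v \<Omega>0 P0 k l"
  have C0: "\<Omega>0 \<in> carrier_mat m m" "\<Omega>1 \<in> carrier_mat m m" using O0 O1 density_carrier by auto
  have CP: "P0 \<in> carrier_mat n n" "P1 \<in> carrier_mat n n" using P0 P1 psd_iff by auto
  show ?thesis
  proof (rule var_real[of _ "\<Sum>k<n. \<Sum>l<n. (cmod (?d k l))^2"])
    fix t :: real assume t0: "0 < t" and t1: "t \<le> 1"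
    let ?Ot = "complex_of_real (1 - t) \<cdot>\<^sub>m \<Omega>0 + complex_of_real t \<cdot>\<^sub>m \<Omega>1"
    let ?Pt = "complex_of_real (1 - t) \<cdot>\<^sub>m P0 + complex_of_real t \<cdot>\<^sub>m P1"
    have Ot: "?Ot \<in> density_mats m" by (rule density_comb[OF O0 O1]) (use t0 t1 in auto)
    have Pt: "psd_mat n ?Pt" by (rule psd_comb[OF P0 P1]) (use t0 t1 in auto)
    have S: "Sf m n G v ?Ot ?Pt k l = ?s k l + complex_of_real t * ?d k l" if "k < n" "l < n" for k l
      unfolding Sf_def Nop_comb[OF C0 G that] comb_index[OF CP that]
      by (simp add: algebra_simps)
    have "Phi m n G v ?Ot ?Pt = (\<Sum>k<n. \<Sum>l<n. (cmod (?s k l + complex_of_real t * ?d k l))^2)"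
      unfolding Phi_def using S by (intro sum.cong refl) auto
    also have "\<dots> = Phi m n G v \<Omega>0 P0 + 2 * t * ip n ?s ?d + t^2 * (\<Sum>k<n. \<Sum>l<n. (cmod (?d k l))^2)"
      unfolding Phi_expand Phi_def ..
    finally have "Phi m n G v ?Ot ?Pt = Phi m n G v \<Omega>0 P0 + 2 * t * ip n ?s ?d + t^2 * (\<Sum>k<n. \<Sum>l<n. (cmod (?d k l))^2)" .
    moreover have "Phi m n G v \<Omega>0 P0 \<le> Phi m n G v ?Ot ?Pt" by (rule glob[OF Ot Pt])
    ultimately show "0 \<le> 2 * t * ip n ?s ?d + t^2 * (\<Sum>k<n. \<Sum>l<n. (cmod (?d k l))^2)" by simp
  qed
qed




lemma ip_diff: "ip n s (\<lambda>k l. a k l - b k l) = ip n s a - ip n s b"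
  unfolding ip_def by (simp add: algebra_simps sum_subtractf)

lemma ip_cong: "(\<And>k l. k < n \<Longrightarrow> l < n \<Longrightarrow> a k l = b k l) \<Longrightarrow> ip n s a = ip n s b"
  unfolding ip_def by (intro sum.cong refl) auto

lemma ip_self: "ip n s s = (\<Sum>k<n. \<Sum>l<n. (cmod (s k l))^2)"
  unfolding ip_def by (intro sum.cong refl) (metis Re_complex_of_real complex_norm_square mult.commute)

lemma sum2_zero:
  assumes "(\<Sum>k<n. \<Sum>l<n. (cmod (s k l))^2) = 0" "(k::nat) < n" "l < n"
  shows "s k l = 0"
proof -
  have "\<forall>k\<in>{..<n}. (\<Sum>l<n. (cmod (s k l))^2) = 0"
    using assms(1) by (subst sum_nonneg_eq_0_iff[symmetric]) (auto intro: sum_nonneg)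
  then have "(\<Sum>l<n. (cmod (s k l))^2) = 0" using assms(2) by auto
  then have "\<forall>l\<in>{..<n}. (cmod (s k l))^2 = 0" by (subst sum_nonneg_eq_0_iff[symmetric]) auto
  then show ?thesis using assms(3) by auto
qed

lemma minimax_from_min:
  assumes m: "m \<ge> 1"
    and GH: "hermitian_mat (m*n) G"
    and hyp: "\<And>\<sigma>. \<sigma> \<in> density_mats n \<Longrightarrow> sec_value_B m G \<sigma> \<le> v"
    and O0: "\<Omega>0 \<in> density_mats m" and P0: "psd_mat n P0"
    and glob: "\<And>\<Omega> P. \<Omega> \<in> density_mats m \<Longrightarrow> psd_mat n P \<Longrightarrow> Phi m n G v \<Omega>0 P0 \<le> Phi m n G v \<Omega> P"
  shows "psd_mat n (complex_of_real v \<cdot>\<^sub>m 1\<^sub>m n - Nop m n G \<Omega>0)"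
proof -
  have G: "G \<in> carrier_mat (m*n) (m*n)" using GH unfolding hermitian_mat_def by auto
  have C0: "\<Omega>0 \<in> carrier_mat m m" using O0 density_carrier by auto
  have CP: "P0 \<in> carrier_mat n n" and PP: "psdf n (\<lambda>i j. P0$$(i,j))" using P0 psd_iff by auto
  define s where "s = Sf m n G v \<Omega>0 P0"
  have var: "0 \<le> ip n s (\<lambda>k l. Sf m n G v \<Omega>1 P1 k l - s k l)"
    if "\<Omega>1 \<in> density_mats m" "psd_mat n P1" for \<Omega>1 P1
    unfolding s_def by (rule variational[OF G O0 P0 _ that]) (auto intro: glob)
  have zero_diff: "Sf m n G v \<Omega>0 (0\<^sub>m n n) k l - s k l = - P0$$(k,l)" if "k < n" "l < n" for k l
    unfolding s_def Sf_def using that by simp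
  have two_diff: "Sf m n G v \<Omega>0 (complex_of_real 1 \<cdot>\<^sub>m P0 + complex_of_real 1 \<cdot>\<^sub>m P0) k l - s k l = P0$$(k,l)"
    if "k < n" "l < n" for k l
    unfolding s_def Sf_def using that CP by simp
  have a1: "0 \<le> ip n s (\<lambda>k l. - P0$$(k,l))"
    using var[OF O0 psd_zero] ip_cong[of n "\<lambda>k l. Sf m n G v \<Omega>0 (0\<^sub>m n n) k l - s k l" "\<lambda>k l. - P0$$(k,l)" s] zero_diff
    by simp
  have a2: "0 \<le> ip n s (\<lambda>k l. P0$$(k,l))"
    using var[OF O0 psd_comb[OF P0 P0, of 1 1]] ip_cong[of n "\<lambda>k l. Sf m n G v \<Omega>0 (complex_of_real 1 \<cdot>\<^sub>m P0 + complex_of_real 1 \<cdot>\<^sub>m P0) k l - s k l" "\<lambda>k l. P0$$(k,l)" s] two_diff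
    by simp
  have "ip n s (\<lambda>k l. - P0$$(k,l)) = - ip n s (\<lambda>k l. P0$$(k,l))"
  proof -
    have e: "\<And>z w. Re (cnj z * - w) = - Re (cnj z * w)" by simp
    show ?thesis unfolding ip_def by (simp only: e sum_negf)
  qed
  then have ipP: "ip n s (\<lambda>k l. P0$$(k,l)) = 0" using a1 a2 by simp
  have hN: "hermitian_mat n (Nop m n G \<Omega>0)"
    using Nop_herm[OF GH] O0 unfolding density_mats_def psd_mat_def by blast
  have hs: "cnj (s k l) = s l k" if "k < n" "l < n" for k l
  proof -
    have "cnj (Nop m n G \<Omega>0 $$ (k,l)) = Nop m n G \<Omega>0 $$ (l,k)" using hN that unfolding hermitian_iff by blast
    moreover have "cnj (P0$$(k,l)) = P0$$(l,k)" using PP that unfolding psdf_def by blast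
    ultimately show ?thesis unfolding s_def Sf_def by auto
  qed
  have qs: "0 \<le> Re (qf n s w)" for w
  proof (cases "(\<Sum>k<n. (cmod (w k))^2) = 0")
    case True
    have "w k = 0" if "k < n" for k
    proof -
      have "\<forall>k\<in>{..<n}. (cmod (w k))^2 = 0" using True by (subst sum_nonneg_eq_0_iff[symmetric]) auto
      then show ?thesis using that by auto
    qed
    then have "qf n s w = qf n s (\<lambda>_. 0)" by (intro qf_cong) auto
    then show ?thesis unfolding qf_def by simp
  next
    case False
    define W where "W = (\<Sum>k<n. (cmod (w k))^2)"
    have W: "W > 0" using False unfolding W_def by (simp add: sum_nonneg order_le_neq_trans)
    have R: "rank1 n w \<in> density_mats n" using rank1_density W unfolding W_def by simp
    have Rp: "psd_mat n (rank1 n w)" using R unfolding density_mats_def by simp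
    have RC: "rank1 n w \<in> carrier_mat n n" using R density_carrier by auto
    let ?P1 = "complex_of_real 1 \<cdot>\<^sub>m P0 + complex_of_real 1 \<cdot>\<^sub>m rank1 n w"
    have diff: "Sf m n G v \<Omega>0 ?P1 k l - s k l = w k * cnj (w l) / complex_of_real W" if "k < n" "l < n" for k l
      unfolding s_def Sf_def using that CP RC by (simp add: rank1_def W_def)
    have "0 \<le> ip n s (\<lambda>k l. w k * cnj (w l) / complex_of_real W)"
      using var[OF O0 psd_comb[OF P0 Rp, of 1 1]] ip_cong[of n "\<lambda>k l. Sf m n G v \<Omega>0 ?P1 k l - s k l" "\<lambda>k l. w k * cnj (w l) / complex_of_real W" s] diff
      by simp
    also have "ip n s (\<lambda>k l. w k * cnj (w l) / complex_of_real W) = Re (qf n s w) / W"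
    proof -
      have "ip n s (\<lambda>k l. w k * cnj (w l) / complex_of_real W) = (\<Sum>k<n. \<Sum>l<n. Re (cnj (w k) * s k l * w l) / W)"
        unfolding ip_def
      proof (intro sum.cong refl)
        fix k l
        have "cnj (s k l) * (w k * cnj (w l) / complex_of_real W) = cnj (cnj (w k) * s k l * w l) / complex_of_real W"
          by (simp add: mult.commute mult.left_commute)
        then show "Re (cnj (s k l) * (w k * cnj (w l) / complex_of_real W)) = Re (cnj (w k) * s k l * w l) / W"
          by (simp only: Re_divide_of_real cnj.sel(1))
      qed
      also have "\<dots> = Re (qf n s w) / W" unfolding qf_def Re_sum by (simp add: sum_divide_distrib)
      finally show ?thesis .
    qed
    finally show ?thesis using W by (simp add: divide_nonneg_pos zero_le_divide_iff)
  qed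
  have Ps: "psdf n s" unfolding psdf_def using hs qs by blast
  define Phi0 where "Phi0 = (\<Sum>k<n. \<Sum>l<n. (cmod (s k l))^2)"
  have Phi0_eq: "Phi0 = Phi m n G v \<Omega>0 P0" unfolding Phi0_def Phi_def s_def ..
  show ?thesis
  proof (cases "Phi0 = 0")
    case True
    have s0: "s k l = 0" if "k < n" "l < n" for k l using sum2_zero[OF True[unfolded Phi0_def] that] .
    have "complex_of_real v \<cdot>\<^sub>m 1\<^sub>m n - Nop m n G \<Omega>0 = P0"
    proof (rule eq_matI)
      fix k l assume "k < dim_row P0" "l < dim_col P0"
      then have k: "k < n" and l: "l < n" using CP by auto
      have "s k l = 0" by (rule s0[OF k l])
      then show "(complex_of_real v \<cdot>\<^sub>m 1\<^sub>m n - Nop m n G \<Omega>0) $$ (k, l) = P0 $$ (k, l)"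
        unfolding s_def Sf_def using k l Nop_carrier[of m n G \<Omega>0]
        by (auto simp: algebra_simps split: if_splits)
    qed (use CP Nop_carrier[of m n G \<Omega>0] in auto)
    then show ?thesis using P0 by simp
  next
    case False
    have Phi0_pos: "Phi0 > 0" using False unfolding Phi0_def by (simp add: sum_nonneg order_le_neq_trans)
    define T where "T = (\<Sum>k<n. Re (s k k))"
    have Tnn: "\<And>k. k < n \<Longrightarrow> 0 \<le> Re (s k k)" using psdf_diag(2)[OF Ps] by simp
    have T: "T > 0"
    proof (rule ccontr)
      assume "\<not> T > 0"
      moreover have "0 \<le> T" unfolding T_def using Tnn by (intro sum_nonneg) auto
      ultimately have "T = 0" by linarith
      then have "\<forall>k\<in>{..<n}. Re (s k k) = 0" unfolding T_def using Tnn by (subst sum_nonneg_eq_0_iff[symmetric]) auto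
      then have "s k l = 0" if "k < n" "l < n" for k l using psdf_zero_row[OF Ps that] that by auto
      then have "Phi0 = 0" unfolding Phi0_def by simp
      then show False using False by simp
    qed
    define y0 where "y0 = mat n n (\<lambda>(k,l). s k l / complex_of_real T)"
    have Cy: "y0 \<in> carrier_mat n n" unfolding y0_def by simp
    have yidx: "y0 $$ (k,l) = s k l / complex_of_real T" if "k < n" "l < n" for k l
      unfolding y0_def using that by simp
    have yP: "psdf n (\<lambda>k l. y0 $$ (k,l))"
      unfolding psdf_def
    proof (intro conjI allI impI)
      fix k l assume "k < n" "l < n"
      then show "cnj (y0 $$ (k,l)) = y0 $$ (l,k)" using hs by (simp add: yidx)
    next
      fix w
      have "qf n (\<lambda>k l. y0 $$ (k,l)) w = qf n s w / complex_of_real T"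
        unfolding qf_def by (simp add: yidx sum_divide_distrib)
      then show "0 \<le> Re (qf n (\<lambda>k l. y0 $$ (k,l)) w)" using qs[of w] T by (simp add: Re_divide_of_real)
    qed
    have trs: "(\<Sum>k<n. s k k) = complex_of_real T"
    proof -
      have "(\<Sum>k<n. s k k) = (\<Sum>k<n. complex_of_real (Re (s k k)))"
        using psdf_diag(3)[OF Ps] by (intro sum.cong refl) auto
      then show ?thesis unfolding T_def by simp
    qed
    have "mtrace y0 = (\<Sum>k<n. s k k) / complex_of_real T"
      unfolding mtrace_carrier[OF Cy] by (simp add: yidx sum_divide_distrib)
    also have "\<dots> = 1" unfolding trs using T by simp
    finally have y0d: "y0 \<in> density_mats n" unfolding density_mats_def using psd_iff Cy yP by blast
    have bound: "v + Phi0 / T \<le> payoff G \<Omega> y0" if O: "\<Omega> \<in> density_mats m" for \<Omega>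
    proof -
      have CO: "\<Omega> \<in> carrier_mat m m" using O density_carrier by auto
      have d1: "Sf m n G v \<Omega> P0 k l - s k l = Nop m n G \<Omega> $$ (k,l) - Nop m n G \<Omega>0 $$ (k,l)" if "k < n" "l < n" for k l
        unfolding s_def Sf_def by simp
      have i1: "0 \<le> ip n s (\<lambda>k l. Nop m n G \<Omega> $$ (k,l) - Nop m n G \<Omega>0 $$ (k,l))"
        using var[OF O P0] ip_cong[of n "\<lambda>k l. Sf m n G v \<Omega> P0 k l - s k l" "\<lambda>k l. Nop m n G \<Omega> $$ (k,l) - Nop m n G \<Omega>0 $$ (k,l)" s] d1
        by simp
      have i2: "ip n s (\<lambda>k l. Nop m n G \<Omega>0 $$ (k,l) - (if k = l then complex_of_real v else 0)) = Phi0"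
      proof -
        have "ip n s (\<lambda>k l. Nop m n G \<Omega>0 $$ (k,l) - (if k = l then complex_of_real v else 0))
            = ip n s (\<lambda>k l. s k l - P0 $$ (k,l))"
          by (rule ip_cong) (simp add: s_def Sf_def)
        also have "\<dots> = Phi0" unfolding ip_diff ipP ip_self Phi0_def by simp
        finally show ?thesis .
      qed
      have "ip n s (\<lambda>k l. Nop m n G \<Omega> $$ (k,l) - (if k = l then complex_of_real v else 0))
          = ip n s (\<lambda>k l. Nop m n G \<Omega> $$ (k,l) - Nop m n G \<Omega>0 $$ (k,l))
            + ip n s (\<lambda>k l. Nop m n G \<Omega>0 $$ (k,l) - (if k = l then complex_of_real v else 0))"
        unfolding ip_def by (simp add: sum.distrib[symmetric] algebra_simps)
      then have i3: "Phi0 \<le> ip n s (\<lambda>k l. Nop m n G \<Omega> $$ (k,l) - (if k = l then complex_of_real v else 0))"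
        using i1 i2 by simp
      have i4: "ip n s (\<lambda>k l. Nop m n G \<Omega> $$ (k,l) - (if k = l then complex_of_real v else 0))
          = (\<Sum>k<n. \<Sum>l<n. Re (s l k * Nop m n G \<Omega> $$ (k,l))) - v * T"
      proof -
        have "ip n s (\<lambda>k l. Nop m n G \<Omega> $$ (k,l) - (if k = l then complex_of_real v else 0))
            = (\<Sum>k<n. \<Sum>l<n. Re (s l k * Nop m n G \<Omega> $$ (k,l)) - (if k = l then v * Re (s k k) else 0))"
          unfolding ip_def using hs by (intro sum.cong refl) (auto simp: algebra_simps)
        also have "\<dots> = (\<Sum>k<n. \<Sum>l<n. Re (s l k * Nop m n G \<Omega> $$ (k,l))) - v * T"
          unfolding T_def by (simp add: sum_subtractf sum.delta sum_distrib_left)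
        finally show ?thesis .
      qed
      have "payoff G \<Omega> y0 = Re (Fc m n G \<Omega> y0)" by (rule payoff_eq[OF CO Cy G])
      also have "\<dots> = Re (tp n y0 (Nop m n G \<Omega>))" using tp_Nop[OF CO Cy G] by simp
      also have "\<dots> = (\<Sum>k<n. \<Sum>l<n. Re (s k l * Nop m n G \<Omega> $$ (l,k))) / T"
        unfolding tp_def Re_sum by (simp add: yidx sum_divide_distrib Re_divide_of_real)
      also have "(\<Sum>k<n. \<Sum>l<n. Re (s k l * Nop m n G \<Omega> $$ (l,k))) = (\<Sum>k<n. \<Sum>l<n. Re (s l k * Nop m n G \<Omega> $$ (k,l)))"
        by (rule sum.swap)
      finally have "payoff G \<Omega> y0 = (\<Sum>k<n. \<Sum>l<n. Re (s l k * Nop m n G \<Omega> $$ (k,l))) / T" .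
      moreover have "Phi0 + v * T \<le> (\<Sum>k<n. \<Sum>l<n. Re (s l k * Nop m n G \<Omega> $$ (k,l)))" using i3 i4 by simp
      ultimately show ?thesis using T by (simp add: field_simps)
    qed
    have "v + Phi0 / T \<le> sec_value_B m G y0"
      by (rule sec_ge[OF density_nonempty[OF m]]) (rule bound)
    moreover have "sec_value_B m G y0 \<le> v" by (rule hyp[OF y0d])
    moreover have "Phi0 / T > 0" using Phi0_pos T by simp
    ultimately show ?thesis by simp
  qed
qed




definition dec :: "nat \<Rightarrow> nat \<Rightarrow> (nat \<Rightarrow> real) \<Rightarrow> complex mat" where
  "dec off n x = mat n n (\<lambda>(i,j). Complex (x (off + 2*(i*n+j))) (x (off + 2*(i*n+j) + 1)))"

lemma dec_carrier: "dec off n x \<in> carrier_mat n n"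
  unfolding dec_def by simp

lemma dec_index: "i < n \<Longrightarrow> j < n \<Longrightarrow> dec off n x $$ (i,j) = Complex (x (off + 2*(i*n+j))) (x (off + 2*(i*n+j) + 1))"
  unfolding dec_def by simp

lemma cont_entry:
  assumes "i < n" "j < n"
  shows "continuous_on UNIV (\<lambda>x. dec off n x $$ (i,j))"
proof -
  have "continuous_on UNIV (\<lambda>x::nat\<Rightarrow>real. Complex (x (off + 2*(i*n+j))) (x (off + 2*(i*n+j) + 1)))"
    by (intro continuous_on_Complex continuous_on_product_coordinates)
  then show ?thesis using dec_index[OF assms] by simp
qed

lemma cont_trace: "continuous_on UNIV (\<lambda>x. mtrace (dec off n x))"
proof -
  have "continuous_on UNIV (\<lambda>x. \<Sum>i<n. dec off n x $$ (i,i))"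
    by (intro continuous_on_sum) (auto intro: cont_entry)
  then show ?thesis using mtrace_carrier[OF dec_carrier] by simp
qed

lemma cont_qf: "continuous_on UNIV (\<lambda>x. qf n (\<lambda>i j. dec off n x $$ (i,j)) w)"
  unfolding qf_def
  by (intro continuous_on_sum continuous_on_mult continuous_on_const) (auto intro: cont_entry)

lemma closed_psd: "closed {x. psd_mat n (dec off n x)}"
proof -
  have eq: "{x. psd_mat n (dec off n x)} =
      (\<Inter>i\<in>{..<n}. \<Inter>j\<in>{..<n}. {x. cnj (dec off n x $$ (i,j)) = dec off n x $$ (j,i)})
      \<inter> (\<Inter>w. {x. 0 \<le> Re (qf n (\<lambda>i j. dec off n x $$ (i,j)) w)})"
    unfolding psd_iff psdf_def using dec_carrier by auto
  have c1: "closed {x. cnj (dec off n x $$ (i,j)) = dec off n x $$ (j,i)}" if "i < n" "j < n" for i j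
    by (intro closed_Collect_eq continuous_on_cnj cont_entry that)
  have c2: "closed {x. 0 \<le> Re (qf n (\<lambda>i j. dec off n x $$ (i,j)) w)}" for w
    by (intro closed_Collect_le continuous_on_const continuous_on_Re cont_qf)
  show ?thesis unfolding eq using c1 c2 by (intro closed_Int closed_INT) auto
qed

lemma entry_coord:
  assumes "off \<le> p" "p < off + 2*n*n"
  shows "\<exists>i<n. \<exists>j<n. x p = Re (dec off n x $$ (i,j)) \<or> x p = Im (dec off n x $$ (i,j))"
proof -
  define q where "q = (p - off) div 2"
  have qlt: "q < n*n" using assms unfolding q_def by auto
  have n0: "0 < n" using qlt by (cases n) auto
  define i where "i = q div n"
  define j where "j = q mod n"
  have i: "i < n" unfolding i_def using qlt by (simp add: less_mult_imp_div_less)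
  have j: "j < n" unfolding j_def using n0 by simp
  have ij: "i*n+j = q" unfolding i_def j_def by simp
  have "p = off + 2*q \<or> p = off + 2*q + 1" unfolding q_def using assms(1) by presburger
  then show ?thesis
  proof
    assume "p = off + 2*q"
    then have "x p = Re (dec off n x $$ (i,j))" using dec_index[OF i j] ij by simp
    then show ?thesis using i j by blast
  next
    assume "p = off + 2*q + 1"
    then have "x p = Im (dec off n x $$ (i,j))" using dec_index[OF i j] ij by simp
    then show ?thesis using i j by blast
  qed
qed

lemma coord_bound:
  assumes "off \<le> p" "p < off + 2*n*n" "\<And>i j. i < n \<Longrightarrow> j < n \<Longrightarrow> cmod (dec off n x $$ (i,j)) \<le> B"
  shows "\<bar>x p\<bar> \<le> B"
proof -
  obtain i j where ij: "i < n" "j < n" and "x p = Re (dec off n x $$ (i,j)) \<or> x p = Im (dec off n x $$ (i,j))"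
    using entry_coord[OF assms(1,2)] by blast
  then show ?thesis using abs_Re_le_cmod abs_Im_le_cmod assms(3)[OF ij] by (metis order_trans)
qed

definition Xset :: "nat \<Rightarrow> nat \<Rightarrow> real \<Rightarrow> (nat \<Rightarrow> real) set" where
  "Xset m n R = {x. (\<forall>p\<ge>2*m*m + 2*n*n. x p = 0) \<and> dec 0 m x \<in> density_mats m \<and>
      psd_mat n (dec (2*m*m) n x) \<and> Re (mtrace (dec (2*m*m) n x)) \<le> R}"

lemma Xset_closed: "closed (Xset m n R)"
proof -
  have eq: "Xset m n R = (\<Inter>p\<in>{2*m*m + 2*n*n..}. {x. x p = 0}) \<inter> {x. psd_mat m (dec 0 m x)}
     \<inter> {x. mtrace (dec 0 m x) = 1} \<inter> {x. psd_mat n (dec (2*m*m) n x)}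
     \<inter> {x. Re (mtrace (dec (2*m*m) n x)) \<le> R}"
    unfolding Xset_def density_mats_def by auto
  have c0: "closed {x::nat\<Rightarrow>real. x p = 0}" for p
    by (intro closed_Collect_eq continuous_on_product_coordinates continuous_on_const)
  have c1: "closed {x. mtrace (dec 0 m x) = 1}"
    by (intro closed_Collect_eq cont_trace continuous_on_const)
  have c2: "closed {x. Re (mtrace (dec (2*m*m) n x)) \<le> R}"
    by (intro closed_Collect_le continuous_on_Re cont_trace continuous_on_const)
  show ?thesis unfolding eq using c0 c1 c2 closed_psd by (intro closed_Int closed_INT) auto
qed

lemma Xset_bounded:
  assumes "x \<in> Xset m n R"
  shows "\<bar>x p\<bar> \<le> max 1 R"
proof -
  have D: "dec 0 m x \<in> density_mats m" and P: "psd_mat n (dec (2*m*m) n x)"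
    and T: "Re (mtrace (dec (2*m*m) n x)) \<le> R" and Z: "\<forall>p\<ge>2*m*m + 2*n*n. x p = 0"
    using assms unfolding Xset_def by auto
  consider "p < 2*m*m" | "2*m*m \<le> p" "p < 2*m*m + 2*n*n" | "2*m*m + 2*n*n \<le> p" by linarith
  then show ?thesis
  proof cases
    case 1
    have "\<bar>x p\<bar> \<le> 1"
      by (rule coord_bound[of 0 p m]) (use 1 density_entry_bound[OF D] in auto)
    then show ?thesis by simp
  next
    case 2
    have "\<bar>x p\<bar> \<le> R"
      by (rule coord_bound[of "2*m*m" p n]) (use 2 psd_entry_le_trace[OF P] T in \<open>auto intro: order_trans\<close>)
    then show ?thesis by simp
  next
    case 3
    then show ?thesis using Z by simp
  qed
qed

lemma Xset_compact: "compact (Xset m n R)"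
proof -
  define B where "B = max 1 R"
  have box: "compact (Pi\<^sub>E UNIV (\<lambda>_::nat. {-B..B}))"
  proof -
    have "compactin (product_topology (\<lambda>_::nat. euclidean) UNIV) (Pi\<^sub>E UNIV (\<lambda>_::nat. {-B..B}))"
      unfolding compactin_PiE by simp
    then show ?thesis unfolding euclidean_product_topology compactin_euclidean_iff .
  qed
  have sub: "Xset m n R \<subseteq> Pi\<^sub>E UNIV (\<lambda>_::nat. {-B..B})"
  proof
    fix x assume x: "x \<in> Xset m n R"
    have "-B \<le> x p \<and> x p \<le> B" for p using Xset_bounded[OF x, of p] unfolding B_def by linarith
    then show "x \<in> Pi\<^sub>E UNIV (\<lambda>_::nat. {-B..B})" by (simp add: PiE_iff)
  qed
  have "Xset m n R = Xset m n R \<inter> Pi\<^sub>E UNIV (\<lambda>_::nat. {-B..B})" using sub by blast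
  then show ?thesis using closed_Int_compact[OF Xset_closed[of m n R] box] by simp
qed

definition enc :: "nat \<Rightarrow> nat \<Rightarrow> complex mat \<Rightarrow> complex mat \<Rightarrow> nat \<Rightarrow> real" where
  "enc m n \<Omega> P = (\<lambda>p. if p < 2*m*m then (if even p then Re else Im) (\<Omega> $$ ((p div 2) div m, (p div 2) mod m))
     else if p < 2*m*m + 2*n*n then (if even p then Re else Im) (P $$ (((p - 2*m*m) div 2) div n, ((p - 2*m*m) div 2) mod n))
     else 0)"

lemma dec_enc1:
  assumes "\<Omega> \<in> carrier_mat m m"
  shows "dec 0 m (enc m n \<Omega> P) = \<Omega>"
proof (rule eq_matI)
  fix i j assume "i < dim_row \<Omega>" "j < dim_col \<Omega>"
  then have i: "i < m" and j: "j < m" using assms by auto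
  define q where "q = i*m+j"
  have q: "q < m*m" unfolding q_def using idx_lt[OF i j] .
  have a: "2*q < 2*m*m" "2*q+1 < 2*m*m" using q by auto
  have d: "(2*q) div 2 = q" "(2*q+1) div 2 = q" by auto
  have qd: "q div m = i" "q mod m = j" unfolding q_def using j by auto
  show "dec 0 m (enc m n \<Omega> P) $$ (i,j) = \<Omega> $$ (i,j)"
    unfolding dec_index[OF i j] q_def[symmetric] enc_def using a d qd by (simp add: complex_eq_iff)
qed (use assms dec_carrier in auto)

lemma dec_enc2:
  assumes "P \<in> carrier_mat n n"
  shows "dec (2*m*m) n (enc m n \<Omega> P) = P"
proof (rule eq_matI)
  fix i j assume "i < dim_row P" "j < dim_col P"
  then have i: "i < n" and j: "j < n" using assms by auto
  define q where "q = i*n+j"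
  have q: "q < n*n" unfolding q_def using idx_lt[OF i j] .
  have a: "2*m*m + 2*q < 2*m*m + 2*n*n" "2*m*m + 2*q + 1 < 2*m*m + 2*n*n" using q by auto
  have d: "(2*m*m + 2*q - 2*m*m) div 2 = q" "(2*m*m + 2*q + 1 - 2*m*m) div 2 = q" by auto
  have qd: "q div n = i" "q mod n = j" unfolding q_def using j by auto
  have ev: "even (2*m*m + 2*q)" "\<not> even (2*m*m + 2*q + 1)" by auto
  show "dec (2*m*m) n (enc m n \<Omega> P) $$ (i,j) = P $$ (i,j)"
    unfolding dec_index[OF i j] q_def[symmetric] enc_def using a d qd ev by (simp add: complex_eq_iff)
qed (use assms dec_carrier in auto)

lemma enc_Xset:
  assumes "\<Omega> \<in> density_mats m" "psd_mat n P" "Re (mtrace P) \<le> R"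
  shows "enc m n \<Omega> P \<in> Xset m n R"
proof -
  have C1: "\<Omega> \<in> carrier_mat m m" using assms(1) density_carrier by auto
  have C2: "P \<in> carrier_mat n n" using assms(2) psd_iff by auto
  have z: "\<forall>p\<ge>2*m*m + 2*n*n. enc m n \<Omega> P p = 0" by (simp add: enc_def)
  show ?thesis unfolding Xset_def mem_Collect_eq dec_enc1[OF C1] dec_enc2[OF C2] using assms z
    by blast
qed

lemma cont_Phi:
  assumes G: "G \<in> carrier_mat (m*n) (m*n)"
  shows "continuous_on UNIV (\<lambda>x. Phi m n G v (dec 0 m x) (dec (2*m*m) n x))"
proof -
  have eq: "Phi m n G v (dec 0 m x) (dec (2*m*m) n x) =
     (\<Sum>k<n. \<Sum>l<n. (cmod ((\<Sum>i<m. \<Sum>j<m. dec 0 m x $$ (i,j) * G$$(j*n+k, i*n+l))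
        - (if k = l then complex_of_real v else 0) + dec (2*m*m) n x $$ (k,l)))^2)" for x
    unfolding Phi_def Sf_def by (intro sum.cong refl) (simp add: Nop_index[OF dec_carrier G])
  have "continuous_on UNIV (\<lambda>x. \<Sum>k<n. \<Sum>l<n. (cmod ((\<Sum>i<m. \<Sum>j<m. dec 0 m x $$ (i,j) * G$$(j*n+k, i*n+l))
        - (if k = l then complex_of_real v else 0) + dec (2*m*m) n x $$ (k,l)))^2)"
    by (intro continuous_on_sum continuous_on_power continuous_on_norm continuous_on_add continuous_on_diff
        continuous_on_mult continuous_on_const) (auto intro: cont_entry)
  then show ?thesis unfolding eq .
qed

lemma exists_min_R:
  assumes m: "m \<ge> 1" and G: "G \<in> carrier_mat (m*n) (m*n)" and R: "0 \<le> R"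
  shows "\<exists>\<Omega>0 P0. \<Omega>0 \<in> density_mats m \<and> psd_mat n P0 \<and> Re (mtrace P0) \<le> R \<and>
     (\<forall>\<Omega> P. \<Omega> \<in> density_mats m \<longrightarrow> psd_mat n P \<longrightarrow> Re (mtrace P) \<le> R \<longrightarrow> Phi m n G v \<Omega>0 P0 \<le> Phi m n G v \<Omega> P)"
proof -
  obtain \<Omega>1 where O1: "\<Omega>1 \<in> density_mats m" using density_nonempty[OF m] by blast
  have tz: "Re (mtrace (0\<^sub>m n n)) \<le> R" using R by (simp add: mtrace_def)
  have ne: "Xset m n R \<noteq> {}" using enc_Xset[OF O1 psd_zero tz] by blast
  obtain x0 where x0: "x0 \<in> Xset m n R"
    and min: "\<forall>y\<in>Xset m n R. Phi m n G v (dec 0 m x0) (dec (2*m*m) n x0) \<le> Phi m n G v (dec 0 m y) (dec (2*m*m) n y)"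
    using continuous_attains_inf[OF Xset_compact ne continuous_on_subset[OF cont_Phi[OF G] subset_UNIV]] by blast
  show ?thesis
  proof (intro exI conjI allI impI)
    show "dec 0 m x0 \<in> density_mats m" "psd_mat n (dec (2*m*m) n x0)" "Re (mtrace (dec (2*m*m) n x0)) \<le> R"
      using x0 unfolding Xset_def by auto
  next
    fix \<Omega> P assume a: "\<Omega> \<in> density_mats m" "psd_mat n P" "Re (mtrace P) \<le> R"
    have C1: "\<Omega> \<in> carrier_mat m m" using a(1) density_carrier by auto
    have C2: "P \<in> carrier_mat n n" using a(2) psd_iff by auto
    show "Phi m n G v (dec 0 m x0) (dec (2*m*m) n x0) \<le> Phi m n G v \<Omega> P"
      using min enc_Xset[OF a] unfolding dec_enc1[OF C1] dec_enc2[OF C2] by (metis dec_enc1[OF C1] dec_enc2[OF C2])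
  qed
qed




lemma Nop_bound:
  assumes O: "\<Omega> \<in> density_mats m" and G: "G \<in> carrier_mat (m*n) (m*n)" and k: "k < n" and l: "l < n"
  shows "cmod (Nop m n G \<Omega> $$ (k,l)) \<le> (\<Sum>k<n. \<Sum>l<n. \<Sum>i<m. \<Sum>j<m. cmod (G$$(j*n+k, i*n+l)))"
proof -
  have CO: "\<Omega> \<in> carrier_mat m m" using O density_carrier by auto
  have "cmod (Nop m n G \<Omega> $$ (k,l)) \<le> (\<Sum>i<m. \<Sum>j<m. cmod (\<Omega>$$(i,j) * G$$(j*n+k, i*n+l)))"
    unfolding Nop_index[OF CO G k l]
    by (rule order_trans[OF norm_sum], rule sum_mono, rule norm_sum)
  also have "\<dots> \<le> (\<Sum>i<m. \<Sum>j<m. cmod (G$$(j*n+k, i*n+l)))"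
  proof (intro sum_mono)
    fix i j assume "i \<in> {..<m}" "j \<in> {..<m}"
    then have "cmod (\<Omega>$$(i,j)) \<le> 1" using density_entry_bound[OF O] by auto
    then show "cmod (\<Omega>$$(i,j) * G$$(j*n+k, i*n+l)) \<le> cmod (G$$(j*n+k, i*n+l))"
      by (simp add: norm_mult mult_left_le_one_le)
  qed
  also have "\<dots> \<le> (\<Sum>l<n. \<Sum>i<m. \<Sum>j<m. cmod (G$$(j*n+k, i*n+l)))"
    using l by (intro member_le_sum[of l "{..<n}" "\<lambda>l. \<Sum>i<m. \<Sum>j<m. cmod (G$$(j*n+k, i*n+l))"]) (auto intro!: sum_nonneg)
  also have "\<dots> \<le> (\<Sum>k<n. \<Sum>l<n. \<Sum>i<m. \<Sum>j<m. cmod (G$$(j*n+k, i*n+l)))"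
    using k by (intro member_le_sum[of k "{..<n}" "\<lambda>k. \<Sum>l<n. \<Sum>i<m. \<Sum>j<m. cmod (G$$(j*n+k, i*n+l))"]) (auto intro!: sum_nonneg)
  finally show ?thesis .
qed

lemma trace_sq_bound:
  assumes P: "psd_mat n P" and n: "n \<ge> 1"
  shows "(Re (mtrace P))^2 / n \<le> (\<Sum>k<n. \<Sum>l<n. (cmod (P$$(k,l)))^2)"
proof -
  have CP: "P \<in> carrier_mat n n" using P psd_iff by auto
  have t: "Re (mtrace P) = (\<Sum>k<n. Re (P$$(k,k)))" unfolding mtrace_carrier[OF CP] Re_sum ..
  have "(Re (mtrace P))^2 \<le> (\<Sum>k<n. (Re (P$$(k,k)))^2) * real (card {..<n::nat})"
    unfolding t by (rule sum_squared_le_sum_of_squares)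
  also have "\<dots> = (\<Sum>k<n. (Re (P$$(k,k)))^2) * n" by simp
  finally have a: "(Re (mtrace P))^2 / n \<le> (\<Sum>k<n. (Re (P$$(k,k)))^2)" using n by (simp add: divide_le_eq)
  also have "\<dots> \<le> (\<Sum>k<n. (cmod (P$$(k,k)))^2)"
    by (intro sum_mono) (metis abs_Re_le_cmod abs_ge_zero power2_abs power_mono)
  also have "\<dots> \<le> (\<Sum>k<n. \<Sum>l<n. (cmod (P$$(k,l)))^2)"
    by (intro sum_mono) (rule member_le_sum[of _ "{..<n}" "\<lambda>l. (cmod (P$$(_,l)))^2"], auto)
  finally show ?thesis .
qed

lemma exists_global_min:
  assumes m: "m \<ge> 1" and n: "n \<ge> 1" and G: "G \<in> carrier_mat (m*n) (m*n)"
  shows "\<exists>\<Omega>0 P0. \<Omega>0 \<in> density_mats m \<and> psd_mat n P0 \<and>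
     (\<forall>\<Omega> P. \<Omega> \<in> density_mats m \<longrightarrow> psd_mat n P \<longrightarrow> Phi m n G v \<Omega>0 P0 \<le> Phi m n G v \<Omega> P)"
proof -
  define A where "A = (\<Sum>k<n. \<Sum>l<n. \<Sum>i<m. \<Sum>j<m. cmod (G$$(j*n+k, i*n+l))) + \<bar>v\<bar>"
  have A0: "0 \<le> A" unfolding A_def by (intro add_nonneg_nonneg sum_nonneg) auto
  define R where "R = 2 * A * real n ^ 3"
  have R0: "0 \<le> R" unfolding R_def using A0 by simp
  obtain \<Omega>0 P0 where O0: "\<Omega>0 \<in> density_mats m" and P0: "psd_mat n P0"
    and min: "\<And>\<Omega> P. \<Omega> \<in> density_mats m \<Longrightarrow> psd_mat n P \<Longrightarrow> Re (mtrace P) \<le> R \<Longrightarrow> Phi m n G v \<Omega>0 P0 \<le> Phi m n G v \<Omega> P"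
    using exists_min_R[OF m G R0, of v] by blast
  have aB: "cmod (Sf m n G v \<Omega> (0\<^sub>m n n) k l) \<le> A" if O: "\<Omega> \<in> density_mats m" and k: "k < n" and l: "l < n" for \<Omega> k l
  proof -
    have "cmod (Sf m n G v \<Omega> (0\<^sub>m n n) k l) \<le> cmod (Nop m n G \<Omega> $$ (k,l)) + cmod (if k = l then complex_of_real v else 0)"
      unfolding Sf_def using k l by (simp add: norm_triangle_ineq4)
    also have "\<dots> \<le> A" unfolding A_def using Nop_bound[OF O G k l] by (intro add_mono) auto
    finally show ?thesis .
  qed
  show ?thesis
  proof (intro exI conjI allI impI, fact O0, fact P0)
    fix \<Omega> P assume O: "\<Omega> \<in> density_mats m" and P: "psd_mat n P"
    show "Phi m n G v \<Omega>0 P0 \<le> Phi m n G v \<Omega> P"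
    proof (cases "Re (mtrace P) \<le> R")
      case True then show ?thesis using min O P by blast
    next
      case False
      define t where "t = Re (mtrace P)"
      have tR: "t > R" using False unfolding t_def by simp
      have CP: "P \<in> carrier_mat n n" using P psd_iff by auto
      define a where "a = Sf m n G v \<Omega> (0\<^sub>m n n)"
      have split: "Sf m n G v \<Omega> P k l = a k l + complex_of_real 1 * P$$(k,l)" if "k < n" "l < n" for k l
        unfolding a_def Sf_def using that CP by simp
      have "Phi m n G v \<Omega> P = (\<Sum>k<n. \<Sum>l<n. (cmod (a k l + complex_of_real 1 * P$$(k,l)))^2)"
        unfolding Phi_def using split by (intro sum.cong refl) auto
      also have "\<dots> = Phi m n G v \<Omega> (0\<^sub>m n n) + 2 * 1 * ip n a (\<lambda>k l. P$$(k,l)) + 1^2 * (\<Sum>k<n. \<Sum>l<n. (cmod (P$$(k,l)))^2)"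
        unfolding Phi_expand Phi_def a_def ..
      finally have ph: "Phi m n G v \<Omega> P = Phi m n G v \<Omega> (0\<^sub>m n n) + 2 * ip n a (\<lambda>k l. P$$(k,l)) + (\<Sum>k<n. \<Sum>l<n. (cmod (P$$(k,l)))^2)"
        by simp
      have ipb: "- (A * (real n * real n * t)) \<le> ip n a (\<lambda>k l. P$$(k,l))"
      proof -
        have "- (A * t) \<le> Re (cnj (a k l) * P$$(k,l))" if "k \<in> {..<n}" "l \<in> {..<n}" for k l
        proof -
          have "cmod (cnj (a k l) * P$$(k,l)) \<le> A * t"
            unfolding norm_mult complex_mod_cnj t_def a_def using that aB[OF O] psd_entry_le_trace[OF P] A0
            by (intro mult_mono) auto
          then show ?thesis using abs_Re_le_cmod[of "cnj (a k l) * P$$(k,l)"] by linarith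
        qed
        then have "(\<Sum>k<n. \<Sum>l<n. - (A * t)) \<le> ip n a (\<lambda>k l. P$$(k,l))"
          unfolding ip_def by (intro sum_mono) auto
        then show ?thesis by (simp add: algebra_simps)
      qed
      have sq: "t^2 / n \<le> (\<Sum>k<n. \<Sum>l<n. (cmod (P$$(k,l)))^2)" unfolding t_def by (rule trace_sq_bound[OF P n])
      have pos: "0 < t^2 / n - 2 * (A * (real n * real n * t))"
      proof -
        have n0: "real n > 0" using n by simp
        have t0: "t > 0" using tR R0 by simp
        have "2 * A * real n ^ 3 < t" using tR unfolding R_def .
        then have "2 * A * real n ^ 3 * t < t * t" using t0 by simp
        then have "2 * (A * (real n * real n * t)) * real n < t^2" by (simp add: power2_eq_square power3_eq_cube algebra_simps)
        then show ?thesis using n0 by (simp add: field_simps)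
      qed
      have "Phi m n G v \<Omega> (0\<^sub>m n n) < Phi m n G v \<Omega> P" unfolding ph using ipb sq pos by linarith
      moreover have "Phi m n G v \<Omega>0 P0 \<le> Phi m n G v \<Omega> (0\<^sub>m n n)"
        using min[OF O psd_zero] R0 by (simp add: mtrace_def)
      ultimately show ?thesis by simp
    qed
  qed
qed

lemma minimax:
  assumes m: "m \<ge> 1" and n: "n \<ge> 1" and GH: "hermitian_mat (m*n) G"
    and hyp: "\<And>\<sigma>. \<sigma> \<in> density_mats n \<Longrightarrow> sec_value_B m G \<sigma> \<le> v"
  shows "\<exists>\<Omega>\<in>density_mats m. psd_mat n (complex_of_real v \<cdot>\<^sub>m 1\<^sub>m n - Nop m n G \<Omega>)"
proof -
  have G: "G \<in> carrier_mat (m*n) (m*n)" using GH unfolding hermitian_mat_def by auto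
  obtain \<Omega>0 P0 where O0: "\<Omega>0 \<in> density_mats m" and P0: "psd_mat n P0"
    and glob: "\<And>\<Omega> P. \<Omega> \<in> density_mats m \<Longrightarrow> psd_mat n P \<Longrightarrow> Phi m n G v \<Omega>0 P0 \<le> Phi m n G v \<Omega> P"
    using exists_global_min[OF m n G, of v] by blast
  show ?thesis using minimax_from_min[OF m GH hyp O0 P0 glob] O0 by blast
qed




lemma qf_minus_id:
  "qf n (\<lambda>i j. A i j - (if i = j then c else 0)) w = qf n A w - c * (\<Sum>i<n. cnj (w i) * w i)"
proof -
  have e: "cnj (w i) * (A i j - (if i = j then c else 0)) * w j = cnj (w i) * A i j * w j - (if i = j then c * (cnj (w i) * w i) else 0)" for i j
    by (auto simp: algebra_simps)
  show ?thesis unfolding qf_def e by (simp add: sum_subtractf sum.delta sum_distrib_left)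
qed

lemma dir1:
  assumes m: "m \<ge> 1" and G: "G \<in> carrier_mat (m*n) (m*n)"
    and L1: "loewner_ge m (ptrace_B m n (kron (1\<^sub>m m) \<rho>B * G)) (complex_of_real u \<cdot>\<^sub>m 1\<^sub>m m)"
    and L2: "loewner_ge n (complex_of_real u \<cdot>\<^sub>m 1\<^sub>m n) (ptrace_A m n (kron \<Omega> (1\<^sub>m n) * G))"
    and RB: "\<rho>B \<in> density_mats n" and OM: "\<Omega> \<in> density_mats m"
  shows "\<rho>B \<in> Phi_B m n G"
proof -
  have CB: "\<rho>B \<in> carrier_mat n n" using RB density_carrier by auto
  have CO: "\<Omega> \<in> carrier_mat m m" using OM density_carrier by auto
  have P1: "psd_mat m (Mop m n G \<rho>B - complex_of_real u \<cdot>\<^sub>m 1\<^sub>m m)"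
    using L1 unfolding loewner_ge_def Mop_def by blast
  have P2: "psd_mat n (complex_of_real u \<cdot>\<^sub>m 1\<^sub>m n - Nop m n G \<Omega>)"
    using L2 unfolding loewner_ge_def Nop_def by blast
  have low: "u \<le> payoff G \<rho> \<rho>B" if R: "\<rho> \<in> density_mats m" for \<rho>
  proof -
    have CR: "\<rho> \<in> carrier_mat m m" using R density_carrier by auto
    have pr: "psd_mat m \<rho>" and tr: "mtrace \<rho> = 1" using R unfolding density_mats_def by auto
    have "0 \<le> Re (tp m \<rho> (Mop m n G \<rho>B - complex_of_real u \<cdot>\<^sub>m 1\<^sub>m m))" by (rule F1_mat[OF pr P1])
    also have "tp m \<rho> (Mop m n G \<rho>B - complex_of_real u \<cdot>\<^sub>m 1\<^sub>m m) = tp m \<rho> (Mop m n G \<rho>B) - complex_of_real u"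
      using tp_minus_id(1)[OF CR Mop_carrier[of m n G \<rho>B], of u] tr by simp
    finally have "u \<le> Re (tp m \<rho> (Mop m n G \<rho>B))" by simp
    also have "\<dots> = payoff G \<rho> \<rho>B" unfolding payoff_eq[OF CR CB G] tp_Mop[OF CR CB G] ..
    finally show ?thesis .
  qed
  have secB: "u \<le> sec_value_B m G \<rho>B" by (rule sec_ge[OF density_nonempty[OF m] low])
  have "sec_value_B m G \<sigma> \<le> sec_value_B m G \<rho>B" if S: "\<sigma> \<in> density_mats n" for \<sigma>
  proof -
    have CS: "\<sigma> \<in> carrier_mat n n" using S density_carrier by auto
    have ps: "psd_mat n \<sigma>" and tr: "mtrace \<sigma> = 1" using S unfolding density_mats_def by auto
    have "0 \<le> Re (tp n \<sigma> (complex_of_real u \<cdot>\<^sub>m 1\<^sub>m n - Nop m n G \<Omega>))" by (rule F1_mat[OF ps P2])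
    also have "tp n \<sigma> (complex_of_real u \<cdot>\<^sub>m 1\<^sub>m n - Nop m n G \<Omega>) = complex_of_real u - tp n \<sigma> (Nop m n G \<Omega>)"
      using tp_minus_id(2)[OF CS Nop_carrier[of m n G \<Omega>], of u] tr by simp
    finally have a: "Re (tp n \<sigma> (Nop m n G \<Omega>)) \<le> u" by simp
    have "sec_value_B m G \<sigma> \<le> payoff G \<Omega> \<sigma>" by (rule sec_le[OF S G OM])
    also have "\<dots> = Re (tp n \<sigma> (Nop m n G \<Omega>))" unfolding payoff_eq[OF CO CS G] tp_Nop[OF CO CS G] ..
    finally show ?thesis using a secB by simp
  qed
  then show ?thesis unfolding Phi_B_def using RB by blast
qed

lemma dir2:
  assumes m: "m \<ge> 1" and n: "n \<ge> 1" and GH: "hermitian_mat (m*n) G"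
    and RB: "\<rho>B \<in> Phi_B m n G"
  shows "\<exists>\<Omega> u. loewner_ge m (ptrace_B m n (kron (1\<^sub>m m) \<rho>B * G)) (complex_of_real u \<cdot>\<^sub>m 1\<^sub>m m) \<and>
     loewner_ge n (complex_of_real u \<cdot>\<^sub>m 1\<^sub>m n) (ptrace_A m n (kron \<Omega> (1\<^sub>m n) * G)) \<and>
     psd_mat m \<Omega> \<and> mtrace \<Omega> = 1"
proof -
  have G: "G \<in> carrier_mat (m*n) (m*n)" using GH unfolding hermitian_mat_def by auto
  have RBd: "\<rho>B \<in> density_mats n" and best: "\<And>\<sigma>. \<sigma> \<in> density_mats n \<Longrightarrow> sec_value_B m G \<sigma> \<le> sec_value_B m G \<rho>B"
    using RB unfolding Phi_B_def by auto
  have CB: "\<rho>B \<in> carrier_mat n n" using RBd density_carrier by auto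
  define u where "u = sec_value_B m G \<rho>B"
  obtain \<Omega> where OM: "\<Omega> \<in> density_mats m" and P2: "psd_mat n (complex_of_real u \<cdot>\<^sub>m 1\<^sub>m n - Nop m n G \<Omega>)"
    using minimax[OF m n GH, of u] best unfolding u_def by blast
  let ?M = "Mop m n G \<rho>B"
  have hM: "hermitian_mat m ?M"
    using Mop_herm[OF GH] RBd unfolding density_mats_def psd_mat_def by blast
  have CM: "?M \<in> carrier_mat m m" by (rule Mop_carrier)
  have hMe: "\<And>i j. i < m \<Longrightarrow> j < m \<Longrightarrow> cnj (?M $$ (i,j)) = ?M $$ (j,i)" using hM unfolding hermitian_iff by blast
  have P1: "psd_mat m (?M - complex_of_real u \<cdot>\<^sub>m 1\<^sub>m m)"
    unfolding psd_iff
  proof (intro conjI)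
    show "?M - complex_of_real u \<cdot>\<^sub>m 1\<^sub>m m \<in> carrier_mat m m" by (rule carrier_matI) (use CM in auto)
    show "psdf m (\<lambda>i j. (?M - complex_of_real u \<cdot>\<^sub>m 1\<^sub>m m) $$ (i,j))"
      unfolding psdf_def
    proof (intro conjI allI impI)
      fix i j assume "i < m" "j < m"
      then show "cnj ((?M - complex_of_real u \<cdot>\<^sub>m 1\<^sub>m m) $$ (i,j)) = (?M - complex_of_real u \<cdot>\<^sub>m 1\<^sub>m m) $$ (j,i)"
        using hMe CM by simp
    next
      fix w
      have "qf m (\<lambda>i j. (?M - complex_of_real u \<cdot>\<^sub>m 1\<^sub>m m) $$ (i,j)) w = qf m (\<lambda>i j. ?M $$ (i,j) - (if i = j then complex_of_real u else 0)) w"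
        by (rule qf_cong_r) (use CM in simp)
      also have "\<dots> = qf m (\<lambda>i j. ?M $$ (i,j)) w - complex_of_real u * (\<Sum>i<m. cnj (w i) * w i)"
        by (rule qf_minus_id)
      also have "(\<Sum>i<m. cnj (w i) * w i) = complex_of_real (\<Sum>k<m. (cmod (w k))^2)"
        unfolding of_real_sum complex_norm_square by (simp add: mult.commute)
      finally have e: "Re (qf m (\<lambda>i j. (?M - complex_of_real u \<cdot>\<^sub>m 1\<^sub>m m) $$ (i,j)) w)
          = Re (qf m (\<lambda>i j. ?M $$ (i,j)) w) - u * (\<Sum>k<m. (cmod (w k))^2)" by simp
      show "0 \<le> Re (qf m (\<lambda>i j. (?M - complex_of_real u \<cdot>\<^sub>m 1\<^sub>m m) $$ (i,j)) w)"
      proof (cases "(\<Sum>k<m. (cmod (w k))^2) = 0")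
        case True
        have "w k = 0" if "k < m" for k
        proof -
          have "\<forall>k\<in>{..<m}. (cmod (w k))^2 = 0" using True by (subst sum_nonneg_eq_0_iff[symmetric]) auto
          then show ?thesis using that by auto
        qed
        then have "qf m (\<lambda>i j. ?M $$ (i,j)) w = qf m (\<lambda>i j. ?M $$ (i,j)) (\<lambda>_. 0)" by (intro qf_cong) auto
        then have "qf m (\<lambda>i j. ?M $$ (i,j)) w = 0" unfolding qf_def by simp
        then show ?thesis unfolding e True by simp
      next
        case False
        define W where "W = (\<Sum>k<m. (cmod (w k))^2)"
        have W: "W > 0" using False unfolding W_def by (simp add: sum_nonneg order_le_neq_trans)
        have R: "rank1 m w \<in> density_mats m" using rank1_density W unfolding W_def by simp
        have CR: "rank1 m w \<in> carrier_mat m m" using R density_carrier by auto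
        have "u \<le> payoff G (rank1 m w) \<rho>B" unfolding u_def by (rule sec_le[OF RBd G R])
        also have "\<dots> = Re (tp m (rank1 m w) ?M)" unfolding payoff_eq[OF CR CB G] tp_Mop[OF CR CB G] ..
        also have "\<dots> = Re (qf m (\<lambda>i j. ?M $$ (i,j)) w) / W"
          unfolding tp_rank1[OF CM] W_def[symmetric] by (simp add: Re_divide_of_real)
        finally have "u * W \<le> Re (qf m (\<lambda>i j. ?M $$ (i,j)) w)" using W by (simp add: field_simps)
        then show ?thesis unfolding e W_def[symmetric] by simp
      qed
    qed
  qed
  have L1: "loewner_ge m (ptrace_B m n (kron (1\<^sub>m m) \<rho>B * G)) (complex_of_real u \<cdot>\<^sub>m 1\<^sub>m m)"
    unfolding loewner_ge_def using P1 CM unfolding Mop_def by simp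
  have L2: "loewner_ge n (complex_of_real u \<cdot>\<^sub>m 1\<^sub>m n) (ptrace_A m n (kron \<Omega> (1\<^sub>m n) * G))"
    unfolding loewner_ge_def using P2 Nop_carrier[of m n G \<Omega>] unfolding Nop_def by simp
  show ?thesis using L1 L2 OM unfolding density_mats_def by blast
qed

theorem theorem2:
  fixes nA nB :: nat and H :: "complex mat" and \<Delta> :: real
    and \<rho>A D \<rho>B \<Omega> :: "complex mat" and u :: real
  assumes "nA \<ge> 1" and "nB \<ge> 1"
    and "hermitian_mat (nA * nB) H"
    and "\<Delta> \<ge> 0"
    and "sdp_optimal nA nB H \<Delta> \<rho>A D \<rho>B \<Omega> u"
  shows "bilevel_optimal nA nB H \<Delta> \<rho>A D \<rho>B"
proof -
  have m: "nA \<ge> 1" and n: "nB \<ge> 1" and HH: "hermitian_mat (nA * nB) H" using assms by auto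
  have feas: "sdp_feasible nA nB H \<Delta> \<rho>A D \<rho>B \<Omega> u"
    and opt: "\<And>\<rho>A' D' \<rho>B' \<Omega>' u'. sdp_feasible nA nB H \<Delta> \<rho>A' D' \<rho>B' \<Omega>' u' \<Longrightarrow> payoff H \<rho>A \<rho>B \<le> payoff H \<rho>A' \<rho>B'"
    using assms(5) unfolding sdp_optimal_def by blast+
  have DH: "hermitian_mat (nA * nB) D" and Dn: "mat_norm1 D \<le> \<Delta>"
    using feas unfolding sdp_feasible_def by auto
  have GH: "hermitian_mat (nA * nB) (H + D)" by (rule hermitian_add[OF HH DH])
  have G: "H + D \<in> carrier_mat (nA*nB) (nA*nB)" using GH unfolding hermitian_mat_def by auto
  have RA: "\<rho>A \<in> density_mats nA" and RB: "\<rho>B \<in> density_mats nB" and OM: "\<Omega> \<in> density_mats nA"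
    using feas unfolding sdp_feasible_def density_mats_def by auto
  have L1: "loewner_ge nA (ptrace_B nA nB (kron (1\<^sub>m nA) \<rho>B * (H + D))) (complex_of_real u \<cdot>\<^sub>m 1\<^sub>m nA)"
    and L2: "loewner_ge nB (complex_of_real u \<cdot>\<^sub>m 1\<^sub>m nB) (ptrace_A nA nB (kron \<Omega> (1\<^sub>m nB) * (H + D)))"
    using feas unfolding sdp_feasible_def by auto
  have Phi: "\<rho>B \<in> Phi_B nA nB (H + D)" by (rule dir1[OF m G L1 L2 RB OM])
  have bf: "bilevel_feasible nA nB H \<Delta> \<rho>A D \<rho>B"
    unfolding bilevel_feasible_def deception_set_def using RA RB DH Dn Phi by blast
  have "payoff H \<rho>A \<rho>B \<le> payoff H \<rho>A' \<rho>B'" if bf': "bilevel_feasible nA nB H \<Delta> \<rho>A' D' \<rho>B'" for \<rho>A' D' \<rho>B'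
  proof -
    have RA': "\<rho>A' \<in> density_mats nA" and RB': "\<rho>B' \<in> density_mats nB"
      and D': "D' \<in> deception_set (nA * nB) \<Delta>" and Phi': "\<rho>B' \<in> Phi_B nA nB (H + D')"
      using bf' unfolding bilevel_feasible_def by auto
    have DH': "hermitian_mat (nA * nB) D'" and Dn': "mat_norm1 D' \<le> \<Delta>" using D' unfolding deception_set_def by auto
    have GH': "hermitian_mat (nA * nB) (H + D')" by (rule hermitian_add[OF HH DH'])
    obtain \<Omega>' u' where
      L1': "loewner_ge nA (ptrace_B nA nB (kron (1\<^sub>m nA) \<rho>B' * (H + D'))) (complex_of_real u' \<cdot>\<^sub>m 1\<^sub>m nA)"
      and L2': "loewner_ge nB (complex_of_real u' \<cdot>\<^sub>m 1\<^sub>m nB) (ptrace_A nA nB (kron \<Omega>' (1\<^sub>m nB) * (H + D')))"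
      and PO: "psd_mat nA \<Omega>'" and TO: "mtrace \<Omega>' = 1"
      using dir2[OF m n GH' Phi'] by blast
    have "sdp_feasible nA nB H \<Delta> \<rho>A' D' \<rho>B' \<Omega>' u'"
      unfolding sdp_feasible_def using L1' L2' DH' Dn' PO TO RA' RB' unfolding density_mats_def by blast
    then show ?thesis by (rule opt)
  qed
  then show ?thesis unfolding bilevel_optimal_def using bf by blast
qed


end
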